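(* Each of the following graphs is geodesic-transitive: the Hamming graph $H(k,m)$ ($m\ge2$), the halved $k$-cube $\tfrac12 H(k,2)$, the folded $k$-cube $\bar H(k,2)$, and (for $k$ even) the halved folded $k$-cube $\tfrac12\bar H(k,2)$.
   Context: $H(k,m)$ has vertex set $\{0,1,\dots,m-1\}^k$, two $k$-tuples adjacent iff they differ in exactly one coordinate; $H(k,2)$ is the $k$-cube. The halved $k$-cube is the graph induced by the distance-$2$ graph of $H(k,2)$ on one of its two bipartition classes. The folded $k$-cube is obtained by identifying each vertex $x$ of $H(k,2)$ with its complement $x+(1,\dots,1)$, two classes adjacent iff they contain adjacent vertices. For $k$ even the folded $k$-cube is bipartite and the halved folded $k$-cube is the graph induced by its distance-$2$ graph on one bipartition class. A geodesic of length $\ell$ is a vertex sequence $(v_0,\dots,v_\ell)$ with consecutive vertices adjacent and $d(v_0,v_\ell)=\ell$; a graph is geodesic-transitive if its automorphism group is transitive on geodesics of each length. *)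

theory Defs
  imports Main
begin

definition walk :: "'a set \<Rightarrow> ('a \<Rightarrow> 'a \<Rightarrow> bool) \<Rightarrow> 'a list \<Rightarrow> bool" where
  "walk V E p \<longleftrightarrow> p \<noteq> [] \<and> set p \<subseteq> V \<and>
     (\<forall>i. Suc i < length p \<longrightarrow> E (p ! i) (p ! Suc i))"

definition gdist :: "'a set \<Rightarrow> ('a \<Rightarrow> 'a \<Rightarrow> bool) \<Rightarrow> 'a \<Rightarrow> 'a \<Rightarrow> nat" where
  "gdist V E u v = (LEAST n. \<exists>p. walk V E p \<and> hd p = u \<and> last p = v \<and> length p = Suc n)"

definition geodesic :: "'a set \<Rightarrow> ('a \<Rightarrow> 'a \<Rightarrow> bool) \<Rightarrow> 'a list \<Rightarrow> bool" where
  "geodesic V E p \<longleftrightarrow> walk V E p \<and> gdist V E (hd p) (last p) = length p - 1"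

definition graph_automorphism :: "'a set \<Rightarrow> ('a \<Rightarrow> 'a \<Rightarrow> bool) \<Rightarrow> ('a \<Rightarrow> 'a) \<Rightarrow> bool" where
  "graph_automorphism V E \<sigma> \<longleftrightarrow> bij_betw \<sigma> V V \<and>
     (\<forall>u\<in>V. \<forall>v\<in>V. E u v \<longleftrightarrow> E (\<sigma> u) (\<sigma> v))"

definition geodesic_transitive :: "'a set \<Rightarrow> ('a \<Rightarrow> 'a \<Rightarrow> bool) \<Rightarrow> bool" where
  "geodesic_transitive V E \<longleftrightarrow>
     (\<forall>p q. geodesic V E p \<and> geodesic V E q \<and> length p = length q \<longrightarrow>
        (\<exists>\<sigma>. graph_automorphism V E \<sigma> \<and> map \<sigma> p = q))"

definition hamming_vertices :: "nat \<Rightarrow> nat \<Rightarrow> nat list set" where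
  "hamming_vertices k m = {x. length x = k \<and> set x \<subseteq> {..<m}}"

definition hamming_adj :: "nat list \<Rightarrow> nat list \<Rightarrow> bool" where
  "hamming_adj x y \<longleftrightarrow> length x = length y \<and> card {i. i < length x \<and> x ! i \<noteq> y ! i} = 1"

definition weight :: "nat list \<Rightarrow> nat" where
  "weight x = card {i. i < length x \<and> x ! i = 1}"

definition halved_cube_vertices :: "nat \<Rightarrow> nat list set" where
  "halved_cube_vertices k = {x \<in> hamming_vertices k 2. even (weight x)}"

definition halved_cube_adj :: "nat \<Rightarrow> nat list \<Rightarrow> nat list \<Rightarrow> bool" where
  "halved_cube_adj k x y \<longleftrightarrow> gdist (hamming_vertices k 2) hamming_adj x y = 2"

definition complement :: "nat list \<Rightarrow> nat list" where
  "complement x = map (\<lambda>a. 1 - a) x"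

definition fold_class :: "nat list \<Rightarrow> nat list set" where
  "fold_class x = {x, complement x}"

definition folded_cube_vertices :: "nat \<Rightarrow> nat list set set" where
  "folded_cube_vertices k = fold_class ` hamming_vertices k 2"

definition folded_cube_adj :: "nat list set \<Rightarrow> nat list set \<Rightarrow> bool" where
  "folded_cube_adj A B \<longleftrightarrow> A \<noteq> B \<and> (\<exists>x\<in>A. \<exists>y\<in>B. hamming_adj x y)"

definition halved_folded_cube_vertices :: "nat \<Rightarrow> nat list set set" where
  "halved_folded_cube_vertices k = {A \<in> folded_cube_vertices k. \<exists>x\<in>A. even (weight x)}"

definition halved_folded_cube_adj :: "nat \<Rightarrow> nat list set \<Rightarrow> nat list set \<Rightarrow> bool" where
  "halved_folded_cube_adj k A B \<longleftrightarrow> gdist (folded_cube_vertices k) folded_cube_adj A B = 2"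

end

theory Submission
  imports Defs
begin


lemma walk_Cons:
  "walk V E (a # p) \<longleftrightarrow> a \<in> V \<and> (p = [] \<or> (E a (hd p) \<and> walk V E p))"
proof
  assume w: "walk V E (a # p)"
  show "a \<in> V \<and> (p = [] \<or> (E a (hd p) \<and> walk V E p))"
  proof (cases p)
    case Nil then show ?thesis using w by (simp add: walk_def)
  next
    case (Cons b q)
    have "E a b" using w Cons unfolding walk_def by (metis length_Cons nth_Cons_0 nth_Cons_Suc zero_less_Suc Suc_less_eq)
    moreover have "walk V E p" unfolding walk_def
    proof (intro conjI allI impI)
      show "p \<noteq> []" using Cons by simp
      show "set p \<subseteq> V" using w by (auto simp: walk_def)
      fix i assume "Suc i < length p"
      then have "Suc (Suc i) < length (a # p)" by simp
      then have "E ((a # p) ! Suc i) ((a # p) ! Suc (Suc i))" using w unfolding walk_def by blast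
      then show "E (p ! i) (p ! Suc i)" by simp
    qed
    ultimately show ?thesis using w Cons by (simp add: walk_def)
  qed
next
  assume h: "a \<in> V \<and> (p = [] \<or> (E a (hd p) \<and> walk V E p))"
  show "walk V E (a # p)"
  proof (cases p)
    case Nil then show ?thesis using h by (simp add: walk_def)
  next
    case (Cons b q)
    show ?thesis unfolding walk_def
    proof (intro conjI allI impI)
      show "set (a # p) \<subseteq> V" using h Cons by (auto simp: walk_def)
      fix i assume "Suc i < length (a # p)"
      then show "E ((a # p) ! i) ((a # p) ! Suc i)"
        using h Cons by (cases i) (auto simp: walk_def)
    qed simp
  qed
qed

lemma walk_single[simp]: "walk V E [a] \<longleftrightarrow> a \<in> V"
  by (simp add: walk_Cons)

lemma walk_append_single:
  "walk V E (p @ [a]) \<longleftrightarrow> (p = [] \<and> a \<in> V) \<or> (p \<noteq> [] \<and> walk V E p \<and> a \<in> V \<and> E (last p) a)"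
proof (induction p)
  case Nil then show ?case by simp
next
  case (Cons b p)
  then show ?case by (cases p) (auto simp: walk_Cons)
qed

lemma walk_nonempty: "walk V E p \<Longrightarrow> p \<noteq> []" by (simp add: walk_def)
lemma walk_set: "walk V E p \<Longrightarrow> set p \<subseteq> V" by (simp add: walk_def)

lemma walk_take: "walk V E p \<Longrightarrow> 0 < n \<Longrightarrow> walk V E (take n p)"
  unfolding walk_def by (auto dest: in_set_takeD)

lemma walk_drop: "walk V E p \<Longrightarrow> n < length p \<Longrightarrow> walk V E (drop n p)"
  unfolding walk_def by (auto dest: in_set_dropD simp: add.commute[of n])

lemma gdist_le: "walk V E p \<Longrightarrow> gdist V E (hd p) (last p) \<le> length p - 1"
  unfolding gdist_def
  by (rule Least_le, rule exI[of _ p], auto simp: walk_def)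

lemma gdist_le': "walk V E p \<Longrightarrow> hd p = u \<Longrightarrow> last p = v \<Longrightarrow> gdist V E u v \<le> length p - 1"
  using gdist_le by blast

lemma gdist_attained:
  assumes "walk V E p" "hd p = u" "last p = v"
  shows "\<exists>q. walk V E q \<and> hd q = u \<and> last q = v \<and> length q = Suc (gdist V E u v)"
proof -
  have ex: "\<exists>n. \<exists>q. walk V E q \<and> hd q = u \<and> last q = v \<and> length q = Suc n"
    using assms by (intro exI[of _ "length p - 1"] exI[of _ p]) (auto simp: walk_def)
  show ?thesis unfolding gdist_def by (rule LeastI_ex[OF ex])
qed

lemma gdist_zero:
  assumes "walk V E p" "hd p = u" "last p = v" "gdist V E u v = 0"
  shows "u = v"
proof -
  obtain q where "walk V E q" "hd q = u" "last q = v" "length q = 1"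
    using gdist_attained[OF assms(1-3)] assms(4) by auto
  then show ?thesis by (cases q) auto
qed

lemma aut_bij: "graph_automorphism V E \<sigma> \<Longrightarrow> bij_betw \<sigma> V V"
  by (simp add: graph_automorphism_def)

lemma aut_in: "graph_automorphism V E \<sigma> \<Longrightarrow> x \<in> V \<Longrightarrow> \<sigma> x \<in> V"
  by (meson aut_bij bij_betwE)

lemma aut_comp:
  "graph_automorphism V E \<sigma> \<Longrightarrow> graph_automorphism V E \<tau> \<Longrightarrow> graph_automorphism V E (\<tau> \<circ> \<sigma>)"
  unfolding graph_automorphism_def
  by (auto intro: bij_betw_trans) (meson bij_betwE)+

lemma aut_inv:
  assumes "graph_automorphism V E \<sigma>"
  shows "graph_automorphism V E (inv_into V \<sigma>)"
proof -
  have b: "bij_betw \<sigma> V V" using assms aut_bij by blast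
  have bi: "bij_betw (inv_into V \<sigma>) V V" using bij_betw_inv_into[OF b] .
  show ?thesis unfolding graph_automorphism_def
  proof (intro conjI ballI bi)
    fix u v assume uv: "u \<in> V" "v \<in> V"
    have "inv_into V \<sigma> u \<in> V" "inv_into V \<sigma> v \<in> V" using bi uv by (meson bij_betwE)+
    moreover have "\<sigma> (inv_into V \<sigma> u) = u" "\<sigma> (inv_into V \<sigma> v) = v"
      using b uv by (simp_all add: bij_betw_imp_surj_on f_inv_into_f)
    ultimately show "E u v \<longleftrightarrow> E (inv_into V \<sigma> u) (inv_into V \<sigma> v)"
      using assms unfolding graph_automorphism_def by metis
  qed
qed

lemma walk_map:
  assumes "graph_automorphism V E \<sigma>" "walk V E p"
  shows "walk V E (map \<sigma> p)"
  using assms(2)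
proof (induction p)
  case Nil then show ?case by (simp add: walk_def)
next
  case (Cons a p)
  show ?case
  proof (cases p)
    case Nil then show ?thesis using Cons assms(1) by (simp add: aut_in walk_Cons)
  next
    case (Cons b q)
    have "a \<in> V" "b \<in> V" "E a b" "walk V E p" using Cons.prems Cons by (auto simp: walk_Cons)
    moreover have "\<sigma> a \<in> V" using aut_in[OF assms(1)] \<open>a \<in> V\<close> .
    ultimately show ?thesis using Cons.IH Cons assms(1) by (simp add: walk_Cons graph_automorphism_def)
  qed
qed

lemma gdist_aut:
  assumes a: "graph_automorphism V E \<sigma>" and uv: "u \<in> V" "v \<in> V"
  shows "gdist V E (\<sigma> u) (\<sigma> v) = gdist V E u v"
proof -
  let ?i = "inv_into V \<sigma>"
  have ai: "graph_automorphism V E ?i" using aut_inv[OF a] .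
  have inj: "inj_on \<sigma> V" using a aut_bij bij_betw_imp_inj_on by blast
  have ii: "?i (\<sigma> x) = x" if "x \<in> V" for x using inj that by (simp add: inv_into_f_f)
  have "(\<exists>q. walk V E q \<and> hd q = \<sigma> u \<and> last q = \<sigma> v \<and> length q = Suc n) \<longleftrightarrow>
        (\<exists>q. walk V E q \<and> hd q = u \<and> last q = v \<and> length q = Suc n)" for n
  proof
    assume "\<exists>q. walk V E q \<and> hd q = \<sigma> u \<and> last q = \<sigma> v \<and> length q = Suc n"
    then obtain q where q: "walk V E q" "hd q = \<sigma> u" "last q = \<sigma> v" "length q = Suc n" by blast
    have ne: "q \<noteq> []" using q walk_nonempty by blast
    show "\<exists>q. walk V E q \<and> hd q = u \<and> last q = v \<and> length q = Suc n"
      using q ne walk_map[OF ai q(1)] ii uv by (intro exI[of _ "map ?i q"]) (simp add: hd_map last_map)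
  next
    assume "\<exists>q. walk V E q \<and> hd q = u \<and> last q = v \<and> length q = Suc n"
    then obtain q where q: "walk V E q" "hd q = u" "last q = v" "length q = Suc n" by blast
    have ne: "q \<noteq> []" using q walk_nonempty by blast
    show "\<exists>q. walk V E q \<and> hd q = \<sigma> u \<and> last q = \<sigma> v \<and> length q = Suc n"
      using q ne walk_map[OF a q(1)] by (intro exI[of _ "map \<sigma> q"]) (simp add: hd_map last_map)
  qed
  then show ?thesis unfolding gdist_def by simp
qed

lemma geodesic_map:
  assumes a: "graph_automorphism V E \<sigma>" and g: "geodesic V E p"
  shows "geodesic V E (map \<sigma> p)"
proof -
  have w: "walk V E p" using g by (simp add: geodesic_def)
  have ne: "p \<noteq> []" using walk_nonempty[OF w] .
  have "hd p \<in> V" "last p \<in> V" using ne walk_set[OF w] by auto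
  then show ?thesis using g ne walk_map[OF a w] gdist_aut[OF a]
    by (simp add: geodesic_def hd_map last_map)
qed

lemma gdist_step:
  assumes "walk V E p" "hd p = u" "last p = v" "E v w" "w \<in> V"
  shows "gdist V E u w \<le> Suc (gdist V E u v)"
proof -
  obtain q where q: "walk V E q" "hd q = u" "last q = v" "length q = Suc (gdist V E u v)"
    using gdist_attained[OF assms(1-3)] by blast
  have ne: "q \<noteq> []" using q walk_nonempty by blast
  have "walk V E (q @ [w])" using q ne assms by (simp add: walk_append_single)
  from gdist_le[OF this] show ?thesis using q ne by simp
qed

lemma geodesic_prefix:
  assumes g: "geodesic V E (p @ [a])" and ne: "p \<noteq> []"
  shows "geodesic V E p"
proof -
  have w: "walk V E (p @ [a])" using g by (simp add: geodesic_def)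
  then have wp: "walk V E p" and e: "E (last p) a" and aV: "a \<in> V" using ne by (auto simp: walk_append_single)
  have "gdist V E (hd p) a \<le> Suc (gdist V E (hd p) (last p))"
    using gdist_step[OF wp refl refl e aV] .
  moreover have "gdist V E (hd p) a = length p" using g ne by (simp add: geodesic_def)
  moreover have "gdist V E (hd p) (last p) \<le> length p - 1" using gdist_le[OF wp] .
  moreover have "length p > 0" using ne by simp
  ultimately have "gdist V E (hd p) (last p) = length p - 1" by linarith
  then show ?thesis using wp unfolding geodesic_def by blast
qed

lemma gt_ext:
  assumes autC: "\<forall>\<sigma>\<in>C. graph_automorphism V E \<sigma>"
    and comp: "\<forall>\<sigma>\<in>C. \<forall>\<tau>\<in>C. \<tau> \<circ> \<sigma> \<in> C"
    and vt: "\<forall>u\<in>V. \<forall>v\<in>V. \<exists>\<sigma>\<in>C. \<sigma> u = v"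
    and ext: "\<forall>p a b. p \<noteq> [] \<longrightarrow> geodesic V E (p @ [a]) \<longrightarrow> geodesic V E (p @ [b]) \<longrightarrow>
                 (\<exists>\<tau>\<in>C. (\<forall>x\<in>set p. \<tau> x = x) \<and> \<tau> a = b)"
  shows "geodesic V E p \<Longrightarrow> geodesic V E q \<Longrightarrow> length p = length q \<Longrightarrow> \<exists>\<sigma>\<in>C. map \<sigma> p = q"
proof (induction p arbitrary: q rule: rev_induct)
  case Nil then show ?case by (simp add: geodesic_def walk_def)
next
  case (snoc x p)
  obtain q' y where qq: "q = q' @ [y]" using snoc.prems(3) by (cases q rule: rev_exhaust) auto
  have lq: "length q' = length p" using snoc.prems(3) qq by simp
  show ?case
  proof (cases "p = []")
    case True
    then have "q' = []" using lq by simp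
    have "x \<in> V" "y \<in> V" using snoc.prems qq \<open>q' = []\<close> True by (auto simp: geodesic_def)
    then obtain \<sigma> where "\<sigma> \<in> C" "\<sigma> x = y" using vt by blast
    then show ?thesis using True qq \<open>q' = []\<close> by auto
  next
    case False
    then have ne': "q' \<noteq> []" using lq by auto
    have gp: "geodesic V E p" by (rule geodesic_prefix[OF snoc.prems(1) False])
    have gq: "geodesic V E q'" using geodesic_prefix[of V E q' y] snoc.prems(2) ne' qq by simp
    obtain \<sigma> where s: "\<sigma> \<in> C" "map \<sigma> p = q'" using snoc.IH[OF gp gq lq[symmetric]] by blast
    have "graph_automorphism V E \<sigma>" using autC s(1) by simp
    then have "geodesic V E (map \<sigma> (p @ [x]))" by (rule geodesic_map[OF _ snoc.prems(1)])
    then have g1: "geodesic V E (q' @ [\<sigma> x])" using s by simp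
    have g2: "geodesic V E (q' @ [y])" using snoc.prems(2) qq by simp
    have "\<exists>\<tau>\<in>C. (\<forall>z\<in>set q'. \<tau> z = z) \<and> \<tau> (\<sigma> x) = y"
      using ext ne' g1 g2 by simp
    then obtain \<tau> where t: "\<tau> \<in> C" "\<forall>z\<in>set q'. \<tau> z = z" "\<tau> (\<sigma> x) = y"
      by blast
    have "map \<tau> q' = q'" using t(2) by (simp add: map_idI)
    then have "map (\<tau> \<circ> \<sigma>) (p @ [x]) = q" using s t(3) qq by (simp flip: map_map)
    moreover have "\<tau> \<circ> \<sigma> \<in> C" using comp s(1) t(1) by simp
    ultimately show ?thesis by blast
  qed
qed

lemma gt_from_class:
  assumes "\<forall>\<sigma>\<in>C. graph_automorphism V E \<sigma>"
    and "\<forall>p q. geodesic V E p \<and> geodesic V E q \<and> length p = length q \<longrightarrow> (\<exists>\<sigma>\<in>C. map \<sigma> p = q)"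
  shows "geodesic_transitive V E"
  using assms unfolding geodesic_transitive_def by blast



lemma walk_exists_d:
  assumes d0: "\<forall>u\<in>V. d u u = 0"
    and step: "\<forall>u\<in>V. \<forall>v\<in>V. u \<noteq> v \<longrightarrow> (\<exists>w\<in>V. E u w \<and> Suc (d w v) = d u v)"
  shows "u \<in> V \<Longrightarrow> v \<in> V \<Longrightarrow> \<exists>p. walk V E p \<and> hd p = u \<and> last p = v \<and> length p = Suc (d u v)"
proof (induction "d u v" arbitrary: u)
  case 0
  have "u = v"
  proof (rule ccontr)
    assume "u \<noteq> v"
    then obtain w where "Suc (d w v) = d u v" using step 0 by blast
    then show False using 0 by simp
  qed
  then show ?case using 0 by (intro exI[of _ "[u]"]) simp
next
  case (Suc n)
  have "u \<noteq> v"
  proof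
    assume "u = v" then have "d u v = 0" using d0 Suc.prems by simp
    then show False using Suc.hyps(2) by simp
  qed
  then obtain w where w: "w \<in> V" "E u w" "Suc (d w v) = d u v" using step Suc.prems by blast
  then have "n = d w v" using Suc.hyps(2) by simp
  then obtain p where p: "walk V E p" "hd p = w" "last p = v" "length p = Suc (d w v)"
    using Suc.hyps(1) w(1) Suc.prems(2) by blast
  have ne: "p \<noteq> []" using p walk_nonempty by blast
  have "walk V E (u # p)" using p w Suc.prems ne by (simp add: walk_Cons)
  then show ?case using p ne w by (intro exI[of _ "u # p"]) simp
qed

lemma walk_d_le:
  assumes d0: "\<forall>u\<in>V. d u u = 0"
    and tri: "\<forall>u\<in>V. \<forall>v\<in>V. \<forall>w\<in>V. d u w \<le> d u v + d v w"
    and adj: "\<forall>u\<in>V. \<forall>v\<in>V. E u v \<longrightarrow> d u v \<le> 1"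
  shows "walk V E p \<Longrightarrow> d (hd p) (last p) \<le> length p - 1"
proof (induction p)
  case Nil then show ?case by (simp add: walk_def)
next
  case (Cons a p)
  show ?case
  proof (cases "p = []")
    case True then show ?thesis using Cons.prems d0 by (simp add: walk_Cons)
  next
    case False
    then obtain b q where pb: "p = b # q" by (cases p) auto
    have h: "a \<in> V" "E a b" "walk V E p" using Cons.prems pb by (auto simp: walk_Cons)
    have bV: "b \<in> V" "last p \<in> V" using walk_set[OF h(3)] pb by auto
    have "d b (last p) \<le> length p - 1" using Cons.IH h(3) pb by simp
    moreover have "d a b \<le> 1" using adj h(1,2) bV(1) by simp
    moreover have "d a (last p) \<le> d a b + d b (last p)" using tri[rule_format, OF h(1) bV(1) bV(2)] .
    ultimately show ?thesis using pb by simp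
  qed
qed

lemma gdist_formula:
  assumes d0: "\<forall>u\<in>V. d u u = 0"
    and tri: "\<forall>u\<in>V. \<forall>v\<in>V. \<forall>w\<in>V. d u w \<le> d u v + d v w"
    and adj: "\<forall>u\<in>V. \<forall>v\<in>V. E u v \<longrightarrow> d u v \<le> 1"
    and step: "\<forall>u\<in>V. \<forall>v\<in>V. u \<noteq> v \<longrightarrow> (\<exists>w\<in>V. E u w \<and> Suc (d w v) = d u v)"
    and uv: "u \<in> V" "v \<in> V"
  shows "gdist V E u v = d u v"
  unfolding gdist_def
proof (rule Least_equality)
  show "\<exists>p. walk V E p \<and> hd p = u \<and> last p = v \<and> length p = Suc (d u v)"
    using walk_exists_d[OF d0 step uv] .
next
  fix n assume "\<exists>p. walk V E p \<and> hd p = u \<and> last p = v \<and> length p = Suc n"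
  then obtain p where "walk V E p" "hd p = u" "last p = v" "length p = Suc n" by blast
  then show "d u v \<le> n" using walk_d_le[OF d0 tri adj] by fastforce
qed

lemma geod_between:
  assumes gd: "\<forall>u\<in>V. \<forall>v\<in>V. gdist V E u v = d u v"
    and tri: "\<forall>u\<in>V. \<forall>v\<in>V. \<forall>w\<in>V. d u w \<le> d u v + d v w"
    and g: "geodesic V E p" and z: "z \<in> set p"
  shows "d (hd p) z + d z (last p) = d (hd p) (last p)"
proof -
  have w: "walk V E p" using g by (simp add: geodesic_def)
  have ne: "p \<noteq> []" using walk_nonempty[OF w] .
  have pV: "set p \<subseteq> V" using walk_set[OF w] .
  obtain j where j: "j < length p" "p ! j = z" using z by (meson in_set_conv_nth)
  have w1: "walk V E (take (Suc j) p)" using walk_take[OF w] by simp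
  have w2: "walk V E (drop j p)" using walk_drop[OF w j(1)] .
  have hd1: "hd (take (Suc j) p) = hd p" using ne by (simp add: hd_take)
  have l1: "last (take (Suc j) p) = z" using j by (simp add: take_Suc_conv_app_nth) 
  have hd2: "hd (drop j p) = z" using j by (simp add: hd_drop_conv_nth)
  have l2: "last (drop j p) = last p" using j by simp
  have V: "hd p \<in> V" "z \<in> V" "last p \<in> V" using pV ne z by auto
  have "gdist V E (hd p) z \<le> j" using gdist_le[OF w1] hd1 l1 j by simp
  moreover have "gdist V E z (last p) \<le> length p - 1 - j" using gdist_le[OF w2] hd2 l2 j by simp
  moreover have "gdist V E (hd p) (last p) = length p - 1" using g by (simp add: geodesic_def)
  moreover have "d (hd p) (last p) \<le> d (hd p) z + d z (last p)" using tri V by blast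
  ultimately show ?thesis using gd V j(1) by auto
qed

lemma walk_project:
  assumes f: "f ` V1 \<subseteq> V2"
    and e: "\<forall>u\<in>V1. \<forall>v\<in>V1. E1 u v \<longrightarrow> E2 (f u) (f v) \<or> f u = f v"
  shows "walk V1 E1 p \<Longrightarrow> \<exists>q. walk V2 E2 q \<and> hd q = f (hd p) \<and> last q = f (last p) \<and> length q \<le> length p"
proof (induction p)
  case Nil then show ?case by (simp add: walk_def)
next
  case (Cons a p)
  show ?case
  proof (cases p)
    case Nil then show ?thesis using Cons.prems f by (intro exI[of _ "[f a]"]) (auto simp: walk_Cons)
  next
    case (Cons b r)
    have h: "a \<in> V1" "E1 a b" "walk V1 E1 p" using Cons.prems Cons by (auto simp: walk_Cons)
    have bV: "b \<in> V1" using h(3) Cons walk_set by fastforce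
    obtain q where q: "walk V2 E2 q" "hd q = f (hd p)" "last q = f (last p)" "length q \<le> length p"
      using Cons.IH h(3) by blast
    have ne: "q \<noteq> []" using q walk_nonempty by blast
    show ?thesis
    proof (cases "f a = f b")
      case True then show ?thesis using q Cons by (intro exI[of _ q]) simp
    next
      case False
      then have "E2 (f a) (f b)" using e h bV by blast
      moreover have "f a \<in> V2" using f h by blast
      ultimately have "walk V2 E2 (f a # q)" using q Cons by (simp add: walk_Cons)
      then show ?thesis using q Cons ne by (intro exI[of _ "f a # q"]) simp
    qed
  qed
qed

lemma gdist_project:
  assumes f: "f ` V1 \<subseteq> V2"
    and e: "\<forall>u\<in>V1. \<forall>v\<in>V1. E1 u v \<longrightarrow> E2 (f u) (f v) \<or> f u = f v"
    and w: "walk V1 E1 p" "hd p = u" "last p = v"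
  shows "gdist V2 E2 (f u) (f v) \<le> gdist V1 E1 u v"
proof -
  obtain p' where p': "walk V1 E1 p'" "hd p' = u" "last p' = v" "length p' = Suc (gdist V1 E1 u v)"
    using gdist_attained[OF w] by blast
  obtain q where "walk V2 E2 q" "hd q = f u" "last q = f v" "length q \<le> length p'"
    using walk_project[OF f e p'(1)] p' by blast
  then show ?thesis using gdist_le[of V2 E2 q] p'(4) by simp
qed

lemma aut_dist2:
  assumes a: "graph_automorphism V E \<sigma>" and W: "W \<subseteq> V" and b: "bij_betw \<sigma> W W"
  shows "graph_automorphism W (\<lambda>x y. gdist V E x y = 2) \<sigma>"
  unfolding graph_automorphism_def
proof (intro conjI b ballI)
  fix u v assume "u \<in> W" "v \<in> W"
  then have "u \<in> V" "v \<in> V" using W by auto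
  then show "(gdist V E u v = 2) \<longleftrightarrow> (gdist V E (\<sigma> u) (\<sigma> v) = 2)" using gdist_aut[OF a] by simp
qed

lemma walk_lift:
  assumes sub: "\<forall>A\<in>V2. A \<subseteq> V1"
    and lift: "\<forall>A\<in>V2. \<forall>B\<in>V2. \<forall>x\<in>A. E2 A B \<longrightarrow> (\<exists>y\<in>B. E1 x y)"
  shows "walk V2 E2 P \<Longrightarrow> x0 \<in> hd P \<Longrightarrow>
     \<exists>p. walk V1 E1 p \<and> hd p = x0 \<and> length p = length P \<and> (\<forall>j<length P. p ! j \<in> P ! j)"
proof (induction P arbitrary: x0)
  case Nil then show ?case by (simp add: walk_def)
next
  case (Cons A P)
  have AV: "A \<in> V2" using Cons.prems by (simp add: walk_Cons)
  have x0: "x0 \<in> A" "x0 \<in> V1" using Cons.prems sub AV by auto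
  show ?case
  proof (cases P)
    case Nil then show ?thesis using x0 by (intro exI[of _ "[x0]"]) simp
  next
    case (Cons B Q)
    have h: "E2 A B" "walk V2 E2 P" using Cons.prems Cons by (auto simp: walk_Cons)
    have BV: "B \<in> V2" using walk_set[OF h(2)] Cons by simp
    obtain y where y: "y \<in> B" "E1 x0 y" using lift AV BV h x0 by blast
    obtain p where p: "walk V1 E1 p" "hd p = y" "length p = length P" "\<forall>j<length P. p ! j \<in> P ! j"
      using Cons.IH[OF h(2)] y Cons by auto
    have ne: "p \<noteq> []" using p walk_nonempty by blast
    have "walk V1 E1 (x0 # p)" using p x0 y ne by (simp add: walk_Cons)
    moreover have "\<forall>j<length (A # P). (x0 # p) ! j \<in> (A # P) ! j"
    proof (intro allI impI)
      fix j assume "j < length (A # P)"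
      then show "(x0 # p) ! j \<in> (A # P) ! j" using p x0 by (cases j) auto
    qed
    ultimately show ?thesis using p by (intro exI[of _ "x0 # p"]) simp
  qed
qed



lemma quotient_gt:
  fixes cls :: "'a \<Rightarrow> 'a set" and VB :: "'a set set"
  assumes q1: "\<forall>x\<in>VA. x \<in> cls x"
    and q2: "\<forall>x\<in>VA. \<forall>y\<in>cls x. y \<in> VA \<and> cls y = cls x"
    and q3: "VB = cls ` VA"
    and q4: "\<forall>u\<in>VA. \<forall>v\<in>VA. EA u v \<longrightarrow> EB (cls u) (cls v) \<or> cls u = cls v"
    and q5: "\<forall>x\<in>VA. \<forall>B\<in>VB. EB (cls x) B \<longrightarrow> (\<exists>y\<in>B. EA x y)"
    and q6: "\<forall>p q. geodesic VA EA p \<and> geodesic VA EA q \<and> length p = length q \<longrightarrow> (\<exists>\<sigma>\<in>C. map \<sigma> p = q)"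
    and q7: "\<forall>\<sigma>\<in>C. graph_automorphism VB EB (\<lambda>A. \<sigma> ` A)"
    and q8: "\<forall>\<sigma>\<in>C. \<forall>x\<in>VA. \<sigma> ` cls x = cls (\<sigma> x)"
  shows "geodesic_transitive VB EB"
proof -
  have repr: "A = cls x" if h1: "A \<in> VB" and h2: "x \<in> A" for A x
  proof -
    obtain x' where "x' \<in> VA" "A = cls x'" using h1 q3 by blast
    then show ?thesis using q2 h2 by metis
  qed
  have sub: "\<forall>A\<in>VB. A \<subseteq> VA" using q2 q3 by blast
  have lift: "\<forall>A\<in>VB. \<forall>B\<in>VB. \<forall>x\<in>A. EB A B \<longrightarrow> (\<exists>y\<in>B. EA x y)"
  proof (intro ballI impI)
    fix A B x assume h: "A \<in> VB" "B \<in> VB" "x \<in> A" "EB A B"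
    have "A = cls x" using repr h by blast
    moreover have "x \<in> VA" using sub h by blast
    ultimately show "\<exists>y\<in>B. EA x y" using q5 h by blast
  qed
  have fV: "cls ` VA \<subseteq> VB" using q3 by simp
  have key: "\<exists>p. geodesic VA EA p \<and> length p = length P \<and> (\<forall>j<length P. P ! j = cls (p ! j))"
    if gP: "geodesic VB EB P" for P
  proof -
    have wP: "walk VB EB P" using gP by (simp add: geodesic_def)
    have neP: "P \<noteq> []" using walk_nonempty[OF wP] .
    have hP: "hd P \<in> VB" using walk_set[OF wP] neP by auto
    then obtain x where x: "x \<in> VA" "hd P = cls x" using q3 by blast
    have "x \<in> hd P" using x q1 by simp
    then obtain p where p: "walk VA EA p" "hd p = x" "length p = length P" "\<forall>j<length P. p ! j \<in> P ! j"
      using walk_lift[OF sub lift wP] by blast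
    have Pj: "\<forall>j<length P. P ! j = cls (p ! j)"
    proof (intro allI impI)
      fix j assume j: "j < length P"
      then have "P ! j \<in> VB" using walk_set[OF wP] by auto
      then show "P ! j = cls (p ! j)" using repr p(4) j by blast
    qed
    have nep: "p \<noteq> []" using walk_nonempty[OF p(1)] .
    have hh: "cls (hd p) = hd P" using Pj nep neP p(3) by (simp add: hd_conv_nth)
    have ll: "cls (last p) = last P" using Pj nep neP p(3) by (simp add: last_conv_nth)
    have "gdist VA EA (hd p) (last p) \<le> length p - 1" using gdist_le[OF p(1)] .
    moreover have "gdist VB EB (cls (hd p)) (cls (last p)) \<le> gdist VA EA (hd p) (last p)"
      using gdist_project[OF fV q4 p(1) refl refl] .
    moreover have "gdist VB EB (hd P) (last P) = length P - 1" using gP by (simp add: geodesic_def)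
    ultimately have "gdist VA EA (hd p) (last p) = length p - 1" using hh ll p(3) by simp
    then have "geodesic VA EA p" using p(1) by (simp add: geodesic_def)
    then show ?thesis using p(3) Pj by blast
  qed
  show ?thesis unfolding geodesic_transitive_def
  proof (intro allI impI)
    fix P Q assume h: "geodesic VB EB P \<and> geodesic VB EB Q \<and> length P = length Q"
    obtain p where p: "geodesic VA EA p" "length p = length P" "\<forall>j<length P. P ! j = cls (p ! j)"
      using key h by blast
    obtain q where q: "geodesic VA EA q" "length q = length Q" "\<forall>j<length Q. Q ! j = cls (q ! j)"
      using key h by blast
    obtain \<sigma> where s: "\<sigma> \<in> C" "map \<sigma> p = q" using q6 p q h by metis
    have pV: "set p \<subseteq> VA" using p(1) walk_set by (simp add: geodesic_def walk_def)
    have "map (\<lambda>A. \<sigma> ` A) P = Q"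
    proof (rule nth_equalityI)
      show "length (map (\<lambda>A. \<sigma> ` A) P) = length Q" using h by simp
      fix j assume j: "j < length (map (\<lambda>A. \<sigma> ` A) P)"
      then have j': "j < length P" by simp
      have pj: "p ! j \<in> VA" using pV j' p(2) by (simp add: subset_iff)
      have "\<sigma> (p ! j) = q ! j" using s(2) j' p(2) by (metis nth_map)
      then show "map (\<lambda>A. \<sigma> ` A) P ! j = Q ! j"
        using j' p(3) q(3) h q8 s(1) pj by simp
    qed
    then show "\<exists>\<sigma>. graph_automorphism VB EB \<sigma> \<and> map \<sigma> P = Q" using q7 s(1) by blast
  qed
qed



definition dset :: "nat list \<Rightarrow> nat list \<Rightarrow> nat set" where
  "dset x y = {i. i < length x \<and> x ! i \<noteq> y ! i}"

definition ham :: "nat list \<Rightarrow> nat list \<Rightarrow> nat" where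
  "ham x y = card (dset x y)"

definition hf :: "(nat \<Rightarrow> nat) \<Rightarrow> (nat \<Rightarrow> nat \<Rightarrow> nat) \<Rightarrow> nat list \<Rightarrow> nat list" where
  "hf \<pi> g x = map (\<lambda>i. g i (x ! \<pi> i)) [0..<length x]"

definition swapv :: "nat \<Rightarrow> nat \<Rightarrow> nat \<Rightarrow> nat" where
  "swapv a b v = (if v = a then b else if v = b then a else v)"

lemma hamV_iff: "x \<in> hamming_vertices k m \<longleftrightarrow> length x = k \<and> (\<forall>i<k. x ! i < m)"
  unfolding hamming_vertices_def by (auto simp: subset_iff in_set_conv_nth)

lemma finite_hamV: "finite (hamming_vertices k m)"
proof -
  have "hamming_vertices k m = {xs. set xs \<subseteq> {..<m} \<and> length xs = k}"
    unfolding hamming_vertices_def by auto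
  then show ?thesis using finite_lists_length_eq[of "{..<m}" k] by simp
qed

lemma dset_sub: "dset x y \<subseteq> {..<length x}" unfolding dset_def by auto
lemma finite_dset[simp]: "finite (dset x y)" using dset_sub finite_subset by blast

lemma ham_adj: "hamming_adj x y \<longleftrightarrow> length x = length y \<and> ham x y = 1"
  unfolding hamming_adj_def ham_def dset_def by simp

lemma dset_sym: "length x = length y \<Longrightarrow> dset x y = dset y x"
  unfolding dset_def by auto

lemma ham_sym: "length x = length y \<Longrightarrow> ham x y = ham y x"
  unfolding ham_def using dset_sym by simp

lemma ham_self[simp]: "ham x x = 0"
  unfolding ham_def dset_def by simp

lemma ham_le_len: "ham x y \<le> length x"
  unfolding ham_def by (metis card_lessThan card_mono dset_sub finite_lessThan)

lemma ham_zero: "length x = length y \<Longrightarrow> ham x y = 0 \<Longrightarrow> x = y"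
proof -
  assume l: "length x = length y" and h: "ham x y = 0"
  then have "dset x y = {}" unfolding ham_def by simp
  then have "\<forall>i<length x. x ! i = y ! i" unfolding dset_def by blast
  then show "x = y" using l by (simp add: nth_equalityI)
qed

lemma ham_tri:
  assumes "length x = length y" "length y = length z"
  shows "ham x z \<le> ham x y + ham y z"
proof -
  have "dset x z \<subseteq> dset x y \<union> dset y z" using assms unfolding dset_def by auto
  then have "card (dset x z) \<le> card (dset x y \<union> dset y z)" by (simp add: card_mono)
  also have "\<dots> \<le> card (dset x y) + card (dset y z)" by (rule card_Un_le)
  finally show ?thesis unfolding ham_def .
qed

lemma between:
  assumes l: "length x = length y" "length z = length y"
    and h: "ham x z + ham z y = ham x y"
    and i: "i < length x"
  shows "z ! i = x ! i \<or> z ! i = y ! i"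
proof -
  have "dset x y \<subseteq> dset x z \<union> dset z y" using l unfolding dset_def by auto
  then have "card (dset x y) \<le> card (dset x z \<union> dset z y)" by (simp add: card_mono)
  moreover have "card (dset x z) + card (dset z y) = card (dset x z \<union> dset z y) + card (dset x z \<inter> dset z y)"
    by (rule card_Un_Int) simp_all
  ultimately have "card (dset x z \<inter> dset z y) = 0" using h unfolding ham_def by linarith
  then have "dset x z \<inter> dset z y = {}" by simp
  then show ?thesis using i l unfolding dset_def by auto
qed

lemma ham_step:
  "\<forall>u\<in>hamming_vertices k m. \<forall>v\<in>hamming_vertices k m. u \<noteq> v \<longrightarrow>
     (\<exists>w\<in>hamming_vertices k m. hamming_adj u w \<and> Suc (ham w v) = ham u v)"
proof (intro ballI impI)
  fix u v assume uv: "u \<in> hamming_vertices k m" "v \<in> hamming_vertices k m" "u \<noteq> v"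
  have lu: "length u = k" "length v = k" using uv by (auto simp: hamV_iff)
  have "dset u v \<noteq> {}"
  proof
    assume "dset u v = {}"
    then have "ham u v = 0" by (simp add: ham_def)
    then show False using ham_zero[of u v] lu uv(3) by simp
  qed
  then obtain i where i: "i \<in> dset u v" by blast
  then have ik: "i < k" "u ! i \<noteq> v ! i" using lu unfolding dset_def by auto
  define w where "w = u[i := v ! i]"
  have lw: "length w = k" using lu w_def by simp
  have wV: "w \<in> hamming_vertices k m" using uv ik lw unfolding w_def by (auto simp: hamV_iff nth_list_update)
  have "dset u w = {i}" using ik lu unfolding dset_def w_def by (auto simp: nth_list_update)
  then have adj: "hamming_adj u w" using lu lw by (simp add: ham_adj ham_def)
  have d2: "dset w v = dset u v - {i}" using ik lu lw unfolding dset_def w_def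
    by (auto simp: nth_list_update)
  have "card (dset u v) > 0" using i card_gt_0_iff by fastforce
  then have "Suc (ham w v) = ham u v" using i d2 unfolding ham_def
    by (simp add: card_Diff_singleton)
  then show "\<exists>w\<in>hamming_vertices k m. hamming_adj u w \<and> Suc (ham w v) = ham u v" using wV adj by blast
qed

lemma gdist_ham:
  assumes "x \<in> hamming_vertices k m" "y \<in> hamming_vertices k m"
  shows "gdist (hamming_vertices k m) hamming_adj x y = ham x y"
proof (rule gdist_formula[OF _ _ _ ham_step assms])
  let ?V = "hamming_vertices k m"
  show "\<forall>u\<in>?V. ham u u = 0" by simp
  show "\<forall>u\<in>?V. \<forall>v\<in>?V. \<forall>w\<in>?V. ham u w \<le> ham u v + ham v w"
    by (auto simp: hamV_iff intro: ham_tri)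
  show "\<forall>u\<in>?V. \<forall>v\<in>?V. hamming_adj u v \<longrightarrow> ham u v \<le> 1" by (simp add: ham_adj)
qed

lemma ham_walk:
  assumes "x \<in> hamming_vertices k m" "y \<in> hamming_vertices k m"
  shows "\<exists>p. walk (hamming_vertices k m) hamming_adj p \<and> hd p = x \<and> last p = y"
  using walk_exists_d[OF _ ham_step assms] by (metis ham_self)

lemma hf_length[simp]: "length (hf \<pi> g x) = length x" by (simp add: hf_def)
lemma hf_nth[simp]: "i < length x \<Longrightarrow> hf \<pi> g x ! i = g i (x ! \<pi> i)" by (simp add: hf_def)

lemma swapv_bij: "a < m \<Longrightarrow> b < m \<Longrightarrow> bij_betw (swapv a b) {..<m} {..<m}"
  by (rule bij_betw_byWitness[where f' = "swapv a b"]) (auto simp: swapv_def)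

lemma swapv_simps[simp]: "swapv a b a = b" "swapv a b b = a" "swapv a a v = v"
  by (auto simp: swapv_def)

lemma hf_aut:
  assumes p: "bij_betw \<pi> {..<k} {..<k}" and g: "\<forall>i<k. bij_betw (g i) {..<m} {..<m}"
  shows "graph_automorphism (hamming_vertices k m) hamming_adj (hf \<pi> g)"
proof -
  let ?V = "hamming_vertices k m" and ?f = "hf \<pi> g"
  have pk: "\<pi> i < k" if "i < k" for i using p that by (meson bij_betwE lessThan_iff)
  have gm: "g i v < m" if "i < k" "v < m" for i v using g that by (meson bij_betwE lessThan_iff)
  have into: "?f x \<in> ?V" if "x \<in> ?V" for x using that pk gm by (auto simp: hamV_iff)
  have dd: "dset (?f x) (?f y) = {i. i < k \<and> x ! \<pi> i \<noteq> y ! \<pi> i}" if "x \<in> ?V" "y \<in> ?V" for x y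
  proof -
    have "g i (x ! \<pi> i) \<noteq> g i (y ! \<pi> i) \<longleftrightarrow> x ! \<pi> i \<noteq> y ! \<pi> i" if "i < k" for i
    proof -
      have "inj_on (g i) {..<m}" using g that bij_betw_imp_inj_on by blast
      moreover have "x ! \<pi> i < m" "y ! \<pi> i < m" using \<open>x \<in> ?V\<close> \<open>y \<in> ?V\<close> pk that by (auto simp: hamV_iff)
      ultimately show ?thesis by (auto simp: inj_on_def)
    qed
    then show ?thesis using that unfolding dset_def by (auto simp: hamV_iff)
  qed
  have hamf: "ham (?f x) (?f y) = ham x y" if "x \<in> ?V" "y \<in> ?V" for x y
  proof -
    let ?C = "{i. i < k \<and> x ! \<pi> i \<noteq> y ! \<pi> i}"
    have "bij_betw \<pi> ?C (dset x y)"
    proof (rule bij_betw_subset[OF p])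
      show "?C \<subseteq> {..<k}" by auto
      show "\<pi> ` ?C = dset x y"
      proof
        show "\<pi> ` ?C \<subseteq> dset x y" using that pk unfolding dset_def by (auto simp: hamV_iff)
        show "dset x y \<subseteq> \<pi> ` ?C"
        proof
          fix j assume "j \<in> dset x y"
          then have j: "j < k" "x ! j \<noteq> y ! j" using that unfolding dset_def by (auto simp: hamV_iff)
          then obtain i where "i < k" "\<pi> i = j" using p by (metis bij_betw_iff_bijections lessThan_iff)
          then show "j \<in> \<pi> ` ?C" using j by blast
        qed
      qed
    qed
    then show ?thesis unfolding ham_def using dd[OF that] bij_betw_same_card by metis
  qed
  have inj: "inj_on ?f ?V"
  proof
    fix x y assume xy: "x \<in> ?V" "y \<in> ?V" "?f x = ?f y"
    have "ham x y = 0" using hamf[OF xy(1) xy(2)] xy(3) by simp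
    then show "x = y" using ham_zero xy by (auto simp: hamV_iff)
  qed
  have "?f ` ?V = ?V" using endo_inj_surj[OF finite_hamV _ inj] into by blast
  then have b: "bij_betw ?f ?V ?V" using inj by (simp add: bij_betw_def)
  show ?thesis unfolding graph_automorphism_def
  proof (intro conjI b ballI)
    fix u v assume "u \<in> ?V" "v \<in> ?V"
    then show "hamming_adj u v \<longleftrightarrow> hamming_adj (?f u) (?f v)"
      using hamf by (auto simp: ham_adj hamV_iff)
  qed
qed

lemma bij_extend:
  assumes S: "finite S" and A: "A \<subseteq> S" and inj: "inj_on f A" and fA: "f ` A \<subseteq> S"
  shows "\<exists>g. bij_betw g S S \<and> (\<forall>x\<in>A. g x = f x)"
proof -
  have "card (S - A) = card (S - f ` A)"
    using S A fA inj by (simp add: card_Diff_subset card_image finite_subset)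
  then obtain h where h: "bij_betw h (S - A) (S - f ` A)"
    using finite_same_card_bij S by blast
  define g where "g x = (if x \<in> A then f x else h x)" for x
  have b1: "bij_betw g A (f ` A)"
    using inj unfolding g_def by (simp add: bij_betw_def inj_on_def)
  have b2: "bij_betw g (S - A) (S - f ` A)"
    using h unfolding g_def by (rule bij_betw_cong[THEN iffD1, rotated]) auto
  have "bij_betw g (A \<union> (S - A)) (f ` A \<union> (S - f ` A))"
    by (rule bij_betw_combine[OF b1 b2]) auto
  moreover have "A \<union> (S - A) = S" "f ` A \<union> (S - f ` A) = S" using A fA by auto
  ultimately show ?thesis unfolding g_def by auto
qed



abbreviation "HV k m \<equiv> hamming_vertices k m"

lemma ham_vt:
  assumes "u \<in> HV k m" "v \<in> HV k m"
  shows "\<exists>\<sigma>. graph_automorphism (HV k m) hamming_adj \<sigma> \<and> \<sigma> u = v"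
proof -
  let ?g = "\<lambda>i. swapv (u ! i) (v ! i)"
  have "\<forall>i<k. bij_betw (?g i) {..<m} {..<m}" using assms by (auto simp: hamV_iff intro!: swapv_bij)
  then have a: "graph_automorphism (HV k m) hamming_adj (hf id ?g)"
    using hf_aut[of id k] by simp
  have "hf id ?g u = v" using assms by (auto simp: hamV_iff intro!: nth_equalityI)
  then show ?thesis using a by blast
qed

lemma ham_geod_facts:
  assumes g: "geodesic (HV k m) hamming_adj p"
  shows "\<forall>z\<in>set p. \<forall>i<k. z ! i = hd p ! i \<or> z ! i = last p ! i"
proof (intro ballI allI impI)
  fix z i assume z: "z \<in> set p" and i: "i < k"
  have w: "walk (HV k m) hamming_adj p" using g by (simp add: geodesic_def)
  have ne: "p \<noteq> []" using walk_nonempty[OF w] .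
  have V: "hd p \<in> HV k m" "last p \<in> HV k m" "z \<in> HV k m" using walk_set[OF w] ne z by auto
  have gd: "\<forall>u\<in>HV k m. \<forall>v\<in>HV k m. gdist (HV k m) hamming_adj u v = ham u v" using gdist_ham by blast
  have tri: "\<forall>u\<in>HV k m. \<forall>v\<in>HV k m. \<forall>w\<in>HV k m. ham u w \<le> ham u v + ham v w"
    by (auto simp: hamV_iff intro: ham_tri)
  have "ham (hd p) z + ham z (last p) = ham (hd p) (last p)"
    using geod_between[OF gd tri g z] .
  then show "z ! i = hd p ! i \<or> z ! i = last p ! i"
    using between[of "hd p" "last p" z i] V i by (auto simp: hamV_iff)
qed

lemma dset_single:
  assumes "hamming_adj y a"
  obtains c where "c < length y" "y ! c \<noteq> a ! c" "\<forall>i<length y. i \<noteq> c \<longrightarrow> a ! i = y ! i"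
proof -
  have "card (dset y a) = 1" using assms by (simp add: ham_adj ham_def)
  then obtain c where "dset y a = {c}" by (rule card_1_singletonE)
  then show ?thesis using that unfolding dset_def by (metis (mono_tags, lifting) insertI1 mem_Collect_eq singletonD)
qed

lemma two_point_bij:
  fixes a1 a2 b1 b2 m :: nat
  assumes "a1 < m" "a2 < m" "b1 < m" "b2 < m" "a1 \<noteq> a2" "b1 \<noteq> b2"
  shows "\<exists>G. bij_betw G {..<m} {..<m} \<and> G a1 = b1 \<and> G a2 = b2"
proof -
  let ?f = "\<lambda>v. if v = a1 then b1 else b2"
  have i: "inj_on ?f {a1, a2}" using assms by (auto simp: inj_on_def)
  have s1: "{a1, a2} \<subseteq> {..<m}" and s2: "?f ` {a1, a2} \<subseteq> {..<m}" using assms by auto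
  obtain G where "bij_betw G {..<m} {..<m}" "\<forall>x\<in>{a1,a2}. G x = ?f x"
    using bij_extend[OF finite_lessThan[of m] s1 i s2] by blast
  then show ?thesis using assms by auto
qed

lemma ham_ext:
  assumes ne: "p \<noteq> []" and ga: "geodesic (HV k m) hamming_adj (p @ [a])"
    and gb: "geodesic (HV k m) hamming_adj (p @ [b])"
  shows "\<exists>\<tau>. graph_automorphism (HV k m) hamming_adj \<tau> \<and> (\<forall>x\<in>set p. \<tau> x = x) \<and> \<tau> a = b"
proof -
  let ?V = "HV k m"
  define x0 where "x0 = hd p"
  define y where "y = last p"
  have wa: "walk ?V hamming_adj (p @ [a])" using ga by (simp add: geodesic_def)
  have wb: "walk ?V hamming_adj (p @ [b])" using gb by (simp add: geodesic_def)
  have wp: "walk ?V hamming_adj p" and aV: "a \<in> ?V" and ya: "hamming_adj y a"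
    using wa ne by (auto simp: walk_append_single y_def)
  have bV: "b \<in> ?V" and yb: "hamming_adj y b" using wb ne by (auto simp: walk_append_single y_def)
  have x0V: "x0 \<in> ?V" and yV: "y \<in> ?V" using walk_set[OF wp] ne x0_def y_def by auto
  have lens: "length x0 = k" "length y = k" "length a = k" "length b = k"
    using x0V yV aV bV by (auto simp: hamV_iff)
  have gp: "geodesic ?V hamming_adj p" using geodesic_prefix[OF ga ne] .
  have zp: "\<forall>z\<in>set p. \<forall>i<k. z ! i = x0 ! i \<or> z ! i = y ! i"
    using ham_geod_facts[OF gp] x0_def y_def by simp
  have ya': "\<forall>i<k. y ! i = x0 ! i \<or> y ! i = a ! i"
    using ham_geod_facts[OF ga] ne x0_def y_def by simp
  have yb': "\<forall>i<k. y ! i = x0 ! i \<or> y ! i = b ! i"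
    using ham_geod_facts[OF gb] ne x0_def y_def by simp
  obtain c where c: "c < k" "y ! c \<noteq> a ! c" "\<forall>i<k. i \<noteq> c \<longrightarrow> a ! i = y ! i"
    using dset_single[OF ya] lens by metis
  obtain c' where c': "c' < k" "y ! c' \<noteq> b ! c'" "\<forall>i<k. i \<noteq> c' \<longrightarrow> b ! i = y ! i"
    using dset_single[OF yb] lens by metis
  have yc: "y ! c = x0 ! c" using ya' c by blast
  have yc': "y ! c' = x0 ! c'" using yb' c' by blast
  have zc: "\<forall>z\<in>set p. z ! c = x0 ! c \<and> z ! c' = x0 ! c'" using zp c(1) c'(1) yc yc' by metis
  have vals: "x0 ! c < m" "a ! c < m" "x0 ! c' < m" "b ! c' < m"
    using x0V aV bV c(1) c'(1) by (auto simp: hamV_iff)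
  obtain G where G: "bij_betw G {..<m} {..<m}" "G (x0 ! c) = x0 ! c'" "G (a ! c) = b ! c'"
    using two_point_bij[OF vals(1) vals(2) vals(3) vals(4)] c(2) c'(2) yc yc' by metis
  define \<pi> where "\<pi> = swapv c' c"
  define g where "g i = (if i = c' then G else if i = c then swapv (x0 ! c') (x0 ! c) else id)" for i
  have pb: "bij_betw \<pi> {..<k} {..<k}" unfolding \<pi>_def using swapv_bij c(1) c'(1) by blast
  have gb': "\<forall>i<k. bij_betw (g i) {..<m} {..<m}"
    unfolding g_def using G(1) swapv_bij vals by (auto simp: bij_betw_id)
  define \<tau> where "\<tau> = hf \<pi> g"
  have aut: "graph_automorphism ?V hamming_adj \<tau>" unfolding \<tau>_def using hf_aut[OF pb gb'] .
  have fixp: "\<tau> z = z" if z: "z \<in> set p" for z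
  proof -
    have zV: "z \<in> ?V" using walk_set[OF wp] z by auto
    then have lz: "length z = k" by (simp add: hamV_iff)
    show ?thesis
    proof (rule nth_equalityI)
      show "length (\<tau> z) = length z" by (simp add: \<tau>_def)
      fix i assume "i < length (\<tau> z)"
      then have i: "i < k" using lz by (simp add: \<tau>_def)
      have "\<tau> z ! i = g i (z ! \<pi> i)" using i lz by (simp add: \<tau>_def)
      also have "\<dots> = z ! i"
        using zc z G(2) by (cases "i = c'"; cases "i = c") (auto simp: g_def \<pi>_def swapv_def)
      finally show "\<tau> z ! i = z ! i" .
    qed
  qed
  have ab: "\<tau> a = b"
  proof (rule nth_equalityI)
    show "length (\<tau> a) = length b" using lens by (simp add: \<tau>_def)
    fix i assume "i < length (\<tau> a)"
    then have i: "i < k" using lens by (simp add: \<tau>_def)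
    have "\<tau> a ! i = g i (a ! \<pi> i)" using i lens by (simp add: \<tau>_def)
    also have "\<dots> = b ! i"
      using i c c' yc yc' G(3) by (cases "i = c'"; cases "i = c") (auto simp: g_def \<pi>_def swapv_def)
    finally show "\<tau> a ! i = b ! i" .
  qed
  show ?thesis using aut fixp ab by blast
qed

lemma ham_gt_strong:
  "geodesic (HV k m) hamming_adj p \<Longrightarrow> geodesic (HV k m) hamming_adj q \<Longrightarrow> length p = length q \<Longrightarrow>
   \<exists>\<sigma>\<in>{\<sigma>. graph_automorphism (HV k m) hamming_adj \<sigma>}. map \<sigma> p = q"
proof (rule gt_ext)
  show "\<forall>\<sigma>\<in>{\<sigma>. graph_automorphism (HV k m) hamming_adj \<sigma>}. graph_automorphism (HV k m) hamming_adj \<sigma>" by simp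
  show "\<forall>\<sigma>\<in>{\<sigma>. graph_automorphism (HV k m) hamming_adj \<sigma>}. \<forall>\<tau>\<in>{\<sigma>. graph_automorphism (HV k m) hamming_adj \<sigma>}.
          \<tau> \<circ> \<sigma> \<in> {\<sigma>. graph_automorphism (HV k m) hamming_adj \<sigma>}" using aut_comp by blast
  show "\<forall>u\<in>HV k m. \<forall>v\<in>HV k m. \<exists>\<sigma>\<in>{\<sigma>. graph_automorphism (HV k m) hamming_adj \<sigma>}. \<sigma> u = v"
    using ham_vt by blast
  show "\<forall>p a b. p \<noteq> [] \<longrightarrow> geodesic (HV k m) hamming_adj (p @ [a]) \<longrightarrow> geodesic (HV k m) hamming_adj (p @ [b]) \<longrightarrow>
          (\<exists>\<tau>\<in>{\<sigma>. graph_automorphism (HV k m) hamming_adj \<sigma>}. (\<forall>x\<in>set p. \<tau> x = x) \<and> \<tau> a = b)"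
    using ham_ext by blast
qed

lemma ham_gt: "geodesic_transitive (HV k m) hamming_adj"
  using ham_gt_strong unfolding geodesic_transitive_def by blast



abbreviation "CV k \<equiv> hamming_vertices k 2"
abbreviation "EV k \<equiv> halved_cube_vertices k"

definition Ch :: "nat \<Rightarrow> (nat list \<Rightarrow> nat list) set" where
  "Ch k = {\<sigma>. graph_automorphism (CV k) hamming_adj \<sigma> \<and> bij_betw \<sigma> (EV k) (EV k)}"

lemma EV_sub: "EV k \<subseteq> CV k" by (auto simp: halved_cube_vertices_def)

lemma bin: "x \<in> CV k \<Longrightarrow> i < k \<Longrightarrow> x ! i = 0 \<or> x ! i = 1"
proof -
  assume "x \<in> CV k" "i < k"
  then have "x ! i < 2" by (simp add: hamV_iff)
  then show ?thesis by linarith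
qed

lemma bin_ne: "x \<in> CV k \<Longrightarrow> y \<in> CV k \<Longrightarrow> i < k \<Longrightarrow> x ! i \<noteq> y ! i \<Longrightarrow> x ! i = 1 - y ! i"
  using bin[of x k i] bin[of y k i] by auto

lemma parity_card:
  assumes x: "x \<in> CV k" and y: "y \<in> CV k"
  shows "ham x y + 2 * card ({i. i < k \<and> x ! i = 1} \<inter> {i. i < k \<and> y ! i = 1}) = weight x + weight y"
proof -
  let ?X = "{i. i < k \<and> x ! i = 1}" and ?Y = "{i. i < k \<and> y ! i = 1}"
  have lx: "length x = k" "length y = k" using x y by (auto simp: hamV_iff)
  have wx: "weight x = card ?X" "weight y = card ?Y" using lx by (simp_all add: weight_def)
  have fin: "finite ?X" "finite ?Y" by (rule finite_subset[of _ "{..<k}"], auto)+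
  have d: "dset x y = (?X \<union> ?Y) - (?X \<inter> ?Y)"
  proof (rule set_eqI)
    fix i
    show "i \<in> dset x y \<longleftrightarrow> i \<in> (?X \<union> ?Y) - (?X \<inter> ?Y)"
    proof (cases "i < k")
      case True
      then show ?thesis using bin[OF x True] bin[OF y True] lx unfolding dset_def by auto
    next
      case False
      then show ?thesis using lx unfolding dset_def by auto
    qed
  qed
  have "card (dset x y) = card (?X \<union> ?Y) - card (?X \<inter> ?Y)"
    unfolding d by (rule card_Diff_subset) (use fin in auto)
  moreover have "card ?X + card ?Y = card (?X \<union> ?Y) + card (?X \<inter> ?Y)"
    by (rule card_Un_Int[OF fin])
  moreover have "card (?X \<inter> ?Y) \<le> card (?X \<union> ?Y)" by (rule card_mono) (use fin in auto)
  ultimately show ?thesis unfolding ham_def wx by linarith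
qed

lemma parity:
  assumes "x \<in> CV k" "y \<in> CV k"
  shows "even (ham x y) \<longleftrightarrow> (even (weight x) \<longleftrightarrow> even (weight y))"
proof -
  obtain c where "ham x y + 2 * c = weight x + weight y" using parity_card[OF assms] by blast
  then show ?thesis by presburger
qed

lemma ham_even: "x \<in> EV k \<Longrightarrow> y \<in> EV k \<Longrightarrow> even (ham x y)"
  using parity by (auto simp: halved_cube_vertices_def)

lemma hc_adj_fun: "halved_cube_adj k = (\<lambda>x y. gdist (CV k) hamming_adj x y = 2)"
  by (simp add: fun_eq_iff halved_cube_adj_def)

lemma hc_adj: "x \<in> CV k \<Longrightarrow> y \<in> CV k \<Longrightarrow> halved_cube_adj k x y \<longleftrightarrow> ham x y = 2"
  by (simp add: halved_cube_adj_def gdist_ham)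

lemma div2_tri: "even (a::nat) \<Longrightarrow> even b \<Longrightarrow> c \<le> a + b \<Longrightarrow> c div 2 \<le> a div 2 + b div 2"
proof -
  assume h: "even a" "even b" "c \<le> a + b"
  have "c div 2 \<le> (a + b) div 2" using div_le_mono[OF h(3), of 2] .
  also have "(a + b) div 2 = a div 2 + b div 2" using h(1) by (rule div_plus_div_distrib_dvd_left)
  finally show ?thesis .
qed

lemma hc_tri: "\<forall>u\<in>EV k. \<forall>v\<in>EV k. \<forall>w\<in>EV k. ham u w div 2 \<le> ham u v div 2 + ham v w div 2"
proof (intro ballI)
  fix u v w assume h: "u \<in> EV k" "v \<in> EV k" "w \<in> EV k"
  then have "u \<in> CV k" "v \<in> CV k" "w \<in> CV k" using EV_sub[of k] by auto
  then have "length u = k" "length v = k" "length w = k" by (simp_all add: hamV_iff)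
  then have "ham u w \<le> ham u v + ham v w" by (intro ham_tri) simp_all
  then show "ham u w div 2 \<le> ham u v div 2 + ham v w div 2"
    by (rule div2_tri[OF ham_even[OF h(1,2)] ham_even[OF h(2,3)]])
qed

lemma two_elems:
  assumes "finite S" "card S \<ge> 2"
  obtains i j where "i \<in> S" "j \<in> S" "i \<noteq> j"
proof -
  have "S \<noteq> {}" using assms by auto
  then obtain i where i: "i \<in> S" by blast
  have c1: "card (S - {i}) \<ge> 1" using assms i by (simp add: card_Diff_singleton)
  have "S - {i} \<noteq> {}"
  proof
    assume e: "S - {i} = {}"
    have "card (S - {i}) = 0" unfolding e by simp
    then show False using c1 by simp
  qed
  then obtain j where "j \<in> S - {i}" by blast
  then show ?thesis using that i by blast
qed

lemma gdist_hc:
  assumes "x \<in> EV k" "y \<in> EV k"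
  shows "gdist (EV k) (halved_cube_adj k) x y = ham x y div 2"
proof (rule gdist_formula[where d = "\<lambda>x y. ham x y div 2", OF _ _ _ _ assms])
  show "\<forall>u\<in>EV k. ham u u div 2 = 0" by simp
  show "\<forall>u\<in>EV k. \<forall>v\<in>EV k. \<forall>w\<in>EV k. ham u w div 2 \<le> ham u v div 2 + ham v w div 2"
    by (rule hc_tri)
  show "\<forall>u\<in>EV k. \<forall>v\<in>EV k. halved_cube_adj k u v \<longrightarrow> ham u v div 2 \<le> 1"
  proof (intro ballI impI)
    fix u v assume h: "u \<in> EV k" "v \<in> EV k" "halved_cube_adj k u v"
    then have "u \<in> CV k" "v \<in> CV k" using EV_sub[of k] by auto
    then show "ham u v div 2 \<le> 1" using hc_adj h(3) by simp
  qed
  show "\<forall>u\<in>EV k. \<forall>v\<in>EV k. u \<noteq> v \<longrightarrow> (\<exists>w\<in>EV k. halved_cube_adj k u w \<and> Suc (ham w v div 2) = ham u v div 2)"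
  proof (intro ballI impI)
    fix u v assume uv: "u \<in> EV k" "v \<in> EV k" "u \<noteq> v"
    have uc: "u \<in> CV k" "v \<in> CV k" using uv EV_sub[of k] by auto
    have lu: "length u = k" "length v = k" using uc by (auto simp: hamV_iff)
    have "ham u v \<noteq> 0" using ham_zero[of u v] lu uv(3) by auto
    moreover have "even (ham u v)" using ham_even uv by blast
    ultimately have h2: "ham u v \<ge> 2" by presburger
    then obtain i j where ij: "i \<in> dset u v" "j \<in> dset u v" "i \<noteq> j"
      using two_elems[of "dset u v"] unfolding ham_def by auto
    then have ik: "i < k" "u ! i \<noteq> v ! i" "j < k" "u ! j \<noteq> v ! j" using lu unfolding dset_def by auto
    define w where "w = u[i := v ! i, j := v ! j]"
    have lw: "length w = k" using lu w_def by simp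
    have wc: "w \<in> CV k" using uc ik lw unfolding w_def by (auto simp: hamV_iff nth_list_update)
    have "dset u w = {i, j}" using ik ij(3) lu unfolding dset_def w_def by (auto simp: nth_list_update)
    then have huw: "ham u w = 2" using ij(3) by (simp add: ham_def)
    then have adj: "halved_cube_adj k u w" using hc_adj uc wc by simp
    have "even (weight w)" using parity[OF uc(1) wc] huw uv(1) by (simp add: halved_cube_vertices_def)
    then have wE: "w \<in> EV k" using wc by (simp add: halved_cube_vertices_def)
    have d2: "dset w v = dset u v - {i, j}" using ik lu lw unfolding dset_def w_def
      by (auto simp: nth_list_update)
    have sub2: "{i, j} \<subseteq> dset u v" using ij by auto
    have "card (dset w v) = card (dset u v) - card {i, j}" unfolding d2
      by (rule card_Diff_subset) (use sub2 in auto)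
    then have hw: "ham w v = ham u v - 2" using ij(3) unfolding ham_def by simp
    obtain c' where c': "ham u v = 2 + c'" using le_Suc_ex[OF h2] by blast
    have "Suc (ham w v div 2) = ham u v div 2" unfolding hw c' by simp
    then show "\<exists>w\<in>EV k. halved_cube_adj k u w \<and> Suc (ham w v div 2) = ham u v div 2"
      using wE adj by blast
  qed
qed

lemma aut_ham:
  assumes "graph_automorphism (CV k) hamming_adj \<sigma>" "x \<in> CV k" "y \<in> CV k"
  shows "ham (\<sigma> x) (\<sigma> y) = ham x y"
proof -
  have s: "\<sigma> x \<in> CV k" "\<sigma> y \<in> CV k" using aut_in[OF assms(1)] assms(2,3) by auto
  have "ham (\<sigma> x) (\<sigma> y) = gdist (CV k) hamming_adj (\<sigma> x) (\<sigma> y)" using gdist_ham[OF s] by simp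
  also have "\<dots> = gdist (CV k) hamming_adj x y" using gdist_aut[OF assms] .
  also have "\<dots> = ham x y" using gdist_ham[OF assms(2,3)] .
  finally show ?thesis .
qed

lemma cube_aut_EV:
  assumes a: "graph_automorphism (CV k) hamming_adj \<sigma>" and x0: "x0 \<in> EV k" "\<sigma> x0 \<in> EV k"
  shows "bij_betw \<sigma> (EV k) (EV k)"
proof -
  have b: "bij_betw \<sigma> (CV k) (CV k)" using aut_bij[OF a] .
  have x0c: "x0 \<in> CV k" "\<sigma> x0 \<in> CV k" using x0 EV_sub[of k] by auto
  have par: "even (weight (\<sigma> x)) \<longleftrightarrow> even (weight x)" if x: "x \<in> CV k" for x
  proof -
    have sx: "\<sigma> x \<in> CV k" using aut_in[OF a x] .
    have "ham (\<sigma> x) (\<sigma> x0) = ham x x0" using aut_ham[OF a x x0c(1)] .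
    then show ?thesis using parity[OF sx x0c(2)] parity[OF x x0c(1)] x0
      by (simp add: halved_cube_vertices_def)
  qed
  have inj: "inj_on \<sigma> (EV k)" using b EV_sub bij_betw_imp_inj_on inj_on_subset by blast
  have "\<sigma> ` EV k = EV k"
  proof
    show "\<sigma> ` EV k \<subseteq> EV k" using par aut_in[OF a] by (auto simp: halved_cube_vertices_def)
    show "EV k \<subseteq> \<sigma> ` EV k"
    proof
      fix z assume z: "z \<in> EV k"
      then have "z \<in> CV k" using EV_sub[of k] by auto
      then obtain x where x: "x \<in> CV k" "\<sigma> x = z" using b by (metis bij_betw_iff_bijections)
      then have "x \<in> EV k" using par[OF x(1)] x z by (auto simp: halved_cube_vertices_def)
      then show "z \<in> \<sigma> ` EV k" using x by blast
    qed
  qed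
  then show ?thesis using inj by (simp add: bij_betw_def)
qed

lemma Ch_aut: "\<sigma> \<in> Ch k \<Longrightarrow> graph_automorphism (EV k) (halved_cube_adj k) \<sigma>"
  unfolding Ch_def hc_adj_fun using aut_dist2 EV_sub by blast

lemma Ch_comp: "\<sigma> \<in> Ch k \<Longrightarrow> \<tau> \<in> Ch k \<Longrightarrow> \<tau> \<circ> \<sigma> \<in> Ch k"
  unfolding Ch_def using aut_comp bij_betw_trans by blast

lemma hc_vt: "u \<in> EV k \<Longrightarrow> v \<in> EV k \<Longrightarrow> \<exists>\<sigma>\<in>Ch k. \<sigma> u = v"
proof -
  assume uv: "u \<in> EV k" "v \<in> EV k"
  then obtain \<sigma> where s: "graph_automorphism (CV k) hamming_adj \<sigma>" "\<sigma> u = v"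
    using ham_vt EV_sub by blast
  then have "bij_betw \<sigma> (EV k) (EV k)" using cube_aut_EV uv by simp
  then show ?thesis using s unfolding Ch_def by blast
qed



lemma hc_geod_facts:
  assumes g: "geodesic (EV k) (halved_cube_adj k) p"
  shows "\<forall>z\<in>set p. \<forall>i<k. z ! i = hd p ! i \<or> z ! i = last p ! i"
proof (intro ballI allI impI)
  fix z i assume z: "z \<in> set p" and i: "i < k"
  have w: "walk (EV k) (halved_cube_adj k) p" using g by (simp add: geodesic_def)
  have ne: "p \<noteq> []" using walk_nonempty[OF w] .
  have V: "hd p \<in> EV k" "last p \<in> EV k" "z \<in> EV k" using walk_set[OF w] ne z by auto
  have C: "hd p \<in> CV k" "last p \<in> CV k" "z \<in> CV k" using V EV_sub[of k] by auto
  have gd: "\<forall>u\<in>EV k. \<forall>v\<in>EV k. gdist (EV k) (halved_cube_adj k) u v = ham u v div 2"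
    using gdist_hc by blast
  have "ham (hd p) z div 2 + ham z (last p) div 2 = ham (hd p) (last p) div 2"
    using geod_between[where d = "\<lambda>x y. ham x y div 2", OF gd hc_tri g z] by simp
  moreover have "even (ham (hd p) z)" "even (ham z (last p))" "even (ham (hd p) (last p))"
    using ham_even V by blast+
  ultimately have "ham (hd p) z + ham z (last p) = ham (hd p) (last p)" by (auto elim!: evenE)
  then show "z ! i = hd p ! i \<or> z ! i = last p ! i"
    using between[of "hd p" "last p" z i] C i by (auto simp: hamV_iff)
qed

lemma dset_two:
  assumes "x \<in> CV k" "y \<in> CV k" "halved_cube_adj k x y"
  obtains c1 c2 where "c1 < k" "c2 < k" "c1 \<noteq> c2" "x ! c1 \<noteq> y ! c1" "x ! c2 \<noteq> y ! c2"
    "\<forall>i<k. i \<noteq> c1 \<and> i \<noteq> c2 \<longrightarrow> y ! i = x ! i"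
proof -
  have "card (dset x y) = 2" using assms hc_adj by (simp add: ham_def)
  then obtain c1 c2 where c: "dset x y = {c1, c2}" "c1 \<noteq> c2" by (auto simp: card_2_iff)
  have lx: "length x = k" using assms by (simp add: hamV_iff)
  have "c1 \<in> dset x y" "c2 \<in> dset x y" using c by auto
  then have "c1 < k" "c2 < k" "x ! c1 \<noteq> y ! c1" "x ! c2 \<noteq> y ! c2" using lx unfolding dset_def by auto
  moreover have "\<forall>i<k. i \<noteq> c1 \<and> i \<noteq> c2 \<longrightarrow> y ! i = x ! i"
  proof (intro allI impI)
    fix i assume "i < k" "i \<noteq> c1 \<and> i \<noteq> c2"
    then have "i \<notin> dset x y" using c by auto
    then show "y ! i = x ! i" using \<open>i < k\<close> lx unfolding dset_def by auto
  qed
  ultimately show ?thesis using that c(2) by blast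
qed



lemma swapv_bin:
  "a \<le> 1 \<Longrightarrow> b \<le> 1 \<Longrightarrow> swapv a b (1 - a) = 1 - (b::nat)"
  by (auto simp: swapv_def)

lemma hc_ext:
  assumes ne: "p \<noteq> []" and ga: "geodesic (EV k) (halved_cube_adj k) (p @ [a])"
    and gb: "geodesic (EV k) (halved_cube_adj k) (p @ [b])"
  shows "\<exists>\<tau>\<in>Ch k. (\<forall>x\<in>set p. \<tau> x = x) \<and> \<tau> a = b"
proof -
  let ?V = "EV k" and ?E = "halved_cube_adj k"
  define x0 where "x0 = hd p"
  define y where "y = last p"
  have wa: "walk ?V ?E (p @ [a])" using ga by (simp add: geodesic_def)
  have wb: "walk ?V ?E (p @ [b])" using gb by (simp add: geodesic_def)
  have wp: "walk ?V ?E p" and aV: "a \<in> ?V" and ya: "?E y a"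
    using wa ne by (auto simp: walk_append_single y_def)
  have bV: "b \<in> ?V" and yb: "?E y b" using wb ne by (auto simp: walk_append_single y_def)
  have x0V: "x0 \<in> ?V" and yV: "y \<in> ?V" using walk_set[OF wp] ne x0_def y_def by auto
  have CC: "x0 \<in> CV k" "y \<in> CV k" "a \<in> CV k" "b \<in> CV k" using x0V yV aV bV EV_sub[of k] by auto
  have lens: "length x0 = k" "length y = k" "length a = k" "length b = k"
    using CC by (auto simp: hamV_iff)
  have gp: "geodesic ?V ?E p" using geodesic_prefix[OF ga ne] .
  have zp: "\<forall>z\<in>set p. \<forall>i<k. z ! i = x0 ! i \<or> z ! i = y ! i"
    using hc_geod_facts[OF gp] x0_def y_def by simp
  have ya': "\<forall>i<k. y ! i = x0 ! i \<or> y ! i = a ! i"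
    using hc_geod_facts[OF ga] ne x0_def y_def by simp
  have yb': "\<forall>i<k. y ! i = x0 ! i \<or> y ! i = b ! i"
    using hc_geod_facts[OF gb] ne x0_def y_def by simp
  obtain c1 c2 where c: "c1 < k" "c2 < k" "c1 \<noteq> c2" "y ! c1 \<noteq> a ! c1" "y ! c2 \<noteq> a ! c2"
    "\<forall>i<k. i \<noteq> c1 \<and> i \<noteq> c2 \<longrightarrow> a ! i = y ! i"
    using dset_two[OF CC(2) CC(3) ya] by metis
  obtain e1 e2 where e: "e1 < k" "e2 < k" "e1 \<noteq> e2" "y ! e1 \<noteq> b ! e1" "y ! e2 \<noteq> b ! e2"
    "\<forall>i<k. i \<noteq> e1 \<and> i \<noteq> e2 \<longrightarrow> b ! i = y ! i"
    using dset_two[OF CC(2) CC(4) yb] by metis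
  define D where "D = dset x0 y"
  have Dk: "D \<subseteq> {..<k}" using dset_sub lens unfolding D_def by metis
  have Dmem: "i \<in> D \<longleftrightarrow> x0 ! i \<noteq> y ! i" if "i < k" for i
    using that lens unfolding D_def dset_def by auto
  have cD: "c1 \<notin> D" "c2 \<notin> D"
    using Dmem[OF c(1)] Dmem[OF c(2)] ya' c(1,2,4,5) by metis+
  have eD: "e1 \<notin> D" "e2 \<notin> D"
    using Dmem[OF e(1)] Dmem[OF e(2)] yb' e(1,2,4,5) by metis+
  define f where "f i = (if i = e1 then c1 else if i = e2 then c2 else i)" for i
  have inj: "inj_on f (D \<union> {e1, e2})"
    unfolding inj_on_def f_def using cD eD c(3) e(3) by auto
  have fk: "f ` (D \<union> {e1, e2}) \<subseteq> {..<k}" unfolding f_def using Dk c(1,2) by auto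
  have Ak: "D \<union> {e1, e2} \<subseteq> {..<k}" using Dk e(1,2) by auto
  obtain \<pi> where pb: "bij_betw \<pi> {..<k} {..<k}" and pf: "\<forall>i\<in>D \<union> {e1, e2}. \<pi> i = f i"
    using bij_extend[OF finite_lessThan[of k] Ak inj fk] by blast
  have pD: "\<pi> i = i" if iD: "i \<in> D" for i
  proof -
    have "\<pi> i = f i" using pf iD by blast
    moreover have "i \<noteq> e1" "i \<noteq> e2" using iD eD by auto
    ultimately show ?thesis by (simp add: f_def)
  qed
  have "\<pi> e1 = f e1" "\<pi> e2 = f e2" using pf by blast+
  then have pe: "\<pi> e1 = c1" "\<pi> e2 = c2" using e(3) by (simp_all add: f_def)
  have pk: "\<pi> i < k" if "i < k" for i using pb that by (meson bij_betwE lessThan_iff)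
  have pinj: "\<pi> i = \<pi> j \<Longrightarrow> i < k \<Longrightarrow> j < k \<Longrightarrow> i = j" for i j
    using inj_onD[OF bij_betw_imp_inj_on[OF pb]] by simp
  have pinvD: "i \<in> D" if "i < k" "\<pi> i \<in> D" for i
  proof -
    have "\<pi> (\<pi> i) = \<pi> i" using pD[OF that(2)] .
    then have "\<pi> i = i" using pinj[OF _ pk[OF that(1)] that(1)] by blast
    then show ?thesis using that(2) by simp
  qed
  have pinvc: "i = e1 \<or> i = e2" if ik: "i < k" and pic: "\<pi> i = c1 \<or> \<pi> i = c2" for i
  proof (cases "\<pi> i = c1")
    case True
    then have "\<pi> i = \<pi> e1" using pe by simp
    then show ?thesis using pinj[OF _ ik e(1)] by blast
  next
    case False
    then have "\<pi> i = \<pi> e2" using pe pic by simp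
    then show ?thesis using pinj[OF _ ik e(2)] by blast
  qed
  define g where "g i = swapv (x0 ! \<pi> i) (x0 ! i)" for i
  have x0b: "x0 ! i \<le> 1" if "i < k" for i using bin[OF CC(1) that] by auto
  have gb': "\<forall>i<k. bij_betw (g i) {..<2} {..<2}"
  proof (intro allI impI)
    fix i assume i: "i < k"
    have "x0 ! \<pi> i < 2" "x0 ! i < 2" using x0b[OF pk[OF i]] x0b[OF i] by auto
    then show "bij_betw (g i) {..<2} {..<2}" unfolding g_def by (rule swapv_bij)
  qed
  define \<tau> where "\<tau> = hf \<pi> g"
  have aut: "graph_automorphism (CV k) hamming_adj \<tau>" unfolding \<tau>_def using hf_aut[OF pb gb'] .
  have fixp: "\<tau> z = z" if z: "z \<in> set p" for z
  proof -
    have zV: "z \<in> CV k" using walk_set[OF wp] z EV_sub[of k] by auto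
    then have lz: "length z = k" by (simp add: hamV_iff)
    show ?thesis
    proof (rule nth_equalityI)
      show "length (\<tau> z) = length z" by (simp add: \<tau>_def)
      fix i assume "i < length (\<tau> z)"
      then have i: "i < k" using lz by (simp add: \<tau>_def)
      have "\<tau> z ! i = g i (z ! \<pi> i)" using i lz by (simp add: \<tau>_def)
      also have "\<dots> = z ! i"
      proof (cases "i \<in> D")
        case True
        then show ?thesis using pD by (simp add: g_def)
      next
        case False
        then have npi: "\<pi> i \<notin> D" using pinvD i by blast
        have "z ! \<pi> i = x0 ! \<pi> i" using zp z pk[OF i] npi Dmem[OF pk[OF i]] by metis
        moreover have "z ! i = x0 ! i" using zp z i False Dmem[OF i] by metis
        ultimately show ?thesis by (simp add: g_def)
      qed
      finally show "\<tau> z ! i = z ! i" .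
    qed
  qed
  have ab: "\<tau> a = b"
  proof (rule nth_equalityI)
    show "length (\<tau> a) = length b" using lens by (simp add: \<tau>_def)
    fix i assume "i < length (\<tau> a)"
    then have i: "i < k" using lens by (simp add: \<tau>_def)
    have pik: "\<pi> i < k" using pk[OF i] .
    have "\<tau> a ! i = g i (a ! \<pi> i)" using i lens by (simp add: \<tau>_def)
    also have "\<dots> = b ! i"
    proof (cases "i \<in> D")
      case True
      then have "i \<noteq> c1" "i \<noteq> c2" "i \<noteq> e1" "i \<noteq> e2" using cD eD by auto
      then have "a ! i = y ! i" "b ! i = y ! i" using c(6) e(6) i by auto
      then show ?thesis using pD True by (simp add: g_def)
    next
      case False
      then have npi: "\<pi> i \<notin> D" using pinvD i by blast
      have yx: "y ! \<pi> i = x0 ! \<pi> i" "y ! i = x0 ! i" using npi False Dmem[OF pik] Dmem[OF i] by auto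
      show ?thesis
      proof (cases "i = e1 \<or> i = e2")
        case True
        then have "\<pi> i = c1 \<or> \<pi> i = c2" using pe by auto
        then have "a ! \<pi> i \<noteq> y ! \<pi> i" using c(4,5) by auto
        then have "a ! \<pi> i = 1 - y ! \<pi> i" using bin_ne[OF CC(3) CC(2) pik] by simp
        moreover have "b ! i = 1 - y ! i" using bin_ne[OF CC(4) CC(2) i] e(4,5) True by auto
        ultimately show ?thesis using yx swapv_bin[OF x0b[OF pik] x0b[OF i]] by (simp add: g_def)
      next
        case False
        then have "\<not> (\<pi> i = c1 \<or> \<pi> i = c2)" using pinvc i by blast
        then have "a ! \<pi> i = y ! \<pi> i" using c(6) pik by auto
        moreover have "b ! i = y ! i" using e(6) i False by auto
        ultimately show ?thesis using yx by (simp add: g_def)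
      qed
    qed
    finally show "\<tau> a ! i = b ! i" .
  qed
  have "x0 \<in> set p" using ne x0_def by simp
  then have "\<tau> x0 = x0" using fixp by blast
  then have "bij_betw \<tau> (EV k) (EV k)" using cube_aut_EV[OF aut x0V] x0V by simp
  then have "\<tau> \<in> Ch k" using aut unfolding Ch_def by blast
  then show ?thesis using fixp ab by blast
qed

lemma hc_gt_strong:
  "geodesic (EV k) (halved_cube_adj k) p \<Longrightarrow> geodesic (EV k) (halved_cube_adj k) q \<Longrightarrow> length p = length q \<Longrightarrow>
   \<exists>\<sigma>\<in>Ch k. map \<sigma> p = q"
proof (rule gt_ext)
  show "\<forall>\<sigma>\<in>Ch k. graph_automorphism (EV k) (halved_cube_adj k) \<sigma>" using Ch_aut by blast
  show "\<forall>\<sigma>\<in>Ch k. \<forall>\<tau>\<in>Ch k. \<tau> \<circ> \<sigma> \<in> Ch k" using Ch_comp by blast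
  show "\<forall>u\<in>EV k. \<forall>v\<in>EV k. \<exists>\<sigma>\<in>Ch k. \<sigma> u = v" using hc_vt by blast
  show "\<forall>p a b. p \<noteq> [] \<longrightarrow> geodesic (EV k) (halved_cube_adj k) (p @ [a]) \<longrightarrow> geodesic (EV k) (halved_cube_adj k) (p @ [b]) \<longrightarrow>
          (\<exists>\<tau>\<in>Ch k. (\<forall>x\<in>set p. \<tau> x = x) \<and> \<tau> a = b)"
    using hc_ext by blast
qed

lemma hc_gt: "geodesic_transitive (EV k) (halved_cube_adj k)"
  by (rule gt_from_class[of "Ch k"]) (use Ch_aut hc_gt_strong in blast)+



abbreviation "FV k \<equiv> folded_cube_vertices k"

lemma compl_len[simp]: "length (complement x) = length x" by (simp add: complement_def)
lemma compl_nth[simp]: "i < length x \<Longrightarrow> complement x ! i = 1 - x ! i" by (simp add: complement_def)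

lemma compl_CV: "x \<in> CV k \<Longrightarrow> complement x \<in> CV k"
  by (auto simp: hamV_iff)

lemma compl_compl: "x \<in> CV k \<Longrightarrow> complement (complement x) = x"
proof (rule nth_equalityI)
  assume x: "x \<in> CV k"
  show "length (complement (complement x)) = length x" by simp
  fix i assume "i < length (complement (complement x))"
  then have i: "i < k" "i < length x" using x by (auto simp: hamV_iff)
  show "complement (complement x) ! i = x ! i" using bin[OF x i(1)] i(2) by auto
qed

lemma dset_compl: "x \<in> CV k \<Longrightarrow> dset x (complement x) = {..<k}"
proof -
  assume x: "x \<in> CV k"
  then have l: "length x = k" by (simp add: hamV_iff)
  show ?thesis unfolding dset_def using l bin[OF x] by force
qed

lemma ham_compl: "x \<in> CV k \<Longrightarrow> ham x (complement x) = k"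
  by (simp add: ham_def dset_compl)

lemma ham_k_compl:
  assumes x: "x \<in> CV k" and y: "y \<in> CV k" and h: "ham x y = k"
  shows "y = complement x"
proof -
  have l: "length x = k" "length y = k" using x y by (auto simp: hamV_iff)
  have "dset x y \<subseteq> {..<k}" using dset_sub l by metis
  moreover have "card (dset x y) = card {..<k}" using h by (simp add: ham_def)
  ultimately have d: "dset x y = {..<k}" by (intro card_subset_eq) auto
  show ?thesis
  proof (rule nth_equalityI)
    show "length y = length (complement x)" using l by simp
    fix i assume "i < length y"
    then have i: "i < k" using l by simp
    then have "x ! i \<noteq> y ! i" using d unfolding dset_def by auto
    then show "y ! i = complement x ! i" using bin_ne[OF y x i] i l by simp
  qed
qed

lemma dset_compl2: "x \<in> CV k \<Longrightarrow> y \<in> CV k \<Longrightarrow> dset (complement x) (complement y) = dset x y"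
proof -
  assume x: "x \<in> CV k" and y: "y \<in> CV k"
  have l: "length x = k" "length y = k" using x y by (auto simp: hamV_iff)
  have "(1 - x ! i \<noteq> 1 - y ! i) \<longleftrightarrow> (x ! i \<noteq> y ! i)" if "i < k" for i
    using bin[OF x that] bin[OF y that] by auto
  then show ?thesis unfolding dset_def using l by auto
qed

lemma adj_compl: "x \<in> CV k \<Longrightarrow> y \<in> CV k \<Longrightarrow> hamming_adj (complement x) (complement y) \<longleftrightarrow> hamming_adj x y"
  by (simp add: ham_adj ham_def dset_compl2)

lemma aut_compl:
  assumes a: "graph_automorphism (CV k) hamming_adj \<sigma>" and x: "x \<in> CV k"
  shows "\<sigma> (complement x) = complement (\<sigma> x)"
proof -
  have xc: "complement x \<in> CV k" using compl_CV[OF x] .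
  have "ham (\<sigma> x) (\<sigma> (complement x)) = k" using aut_ham[OF a x xc] ham_compl[OF x] by simp
  then show ?thesis using ham_k_compl aut_in[OF a x] aut_in[OF a xc] by blast
qed

lemma cls_self: "x \<in> fold_class x" by (simp add: fold_class_def)

lemma cls_mem: "y \<in> fold_class x \<longleftrightarrow> y = x \<or> y = complement x" by (simp add: fold_class_def)

lemma cls_compl: "x \<in> CV k \<Longrightarrow> fold_class (complement x) = fold_class x"
  using compl_compl by (auto simp: fold_class_def)

lemma cls_of_mem: "x \<in> CV k \<Longrightarrow> y \<in> fold_class x \<Longrightarrow> y \<in> CV k \<and> fold_class y = fold_class x"
  using cls_compl compl_CV by (auto simp: fold_class_def)

lemma FV_sub: "A \<in> FV k \<Longrightarrow> A \<subseteq> CV k"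
  unfolding folded_cube_vertices_def using cls_of_mem by blast

lemma aut_cls:
  assumes a: "graph_automorphism (CV k) hamming_adj \<sigma>" and x: "x \<in> CV k"
  shows "\<sigma> ` fold_class x = fold_class (\<sigma> x)"
  using aut_compl[OF a x] by (simp add: fold_class_def)

lemma aut_FV:
  assumes a: "graph_automorphism (CV k) hamming_adj \<sigma>"
  shows "(\<lambda>A. \<sigma> ` A) ` FV k \<subseteq> FV k"
proof
  fix B assume "B \<in> (\<lambda>A. \<sigma> ` A) ` FV k"
  then obtain x where x: "x \<in> CV k" "B = \<sigma> ` fold_class x" unfolding folded_cube_vertices_def by blast
  then have "B = fold_class (\<sigma> x)" using aut_cls[OF a] by simp
  then show "B \<in> FV k" using aut_in[OF a x(1)] unfolding folded_cube_vertices_def by blast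
qed

lemma induced_aut:
  assumes a: "graph_automorphism (CV k) hamming_adj \<sigma>"
  shows "graph_automorphism (FV k) folded_cube_adj (\<lambda>A. \<sigma> ` A)"
proof -
  let ?i = "inv_into (CV k) \<sigma>"
  have ai: "graph_automorphism (CV k) hamming_adj ?i" using aut_inv[OF a] .
  have b: "bij_betw \<sigma> (CV k) (CV k)" using aut_bij[OF a] .
  have inj: "inj_on \<sigma> (CV k)" using b bij_betw_imp_inj_on by blast
  have surj: "\<sigma> ` CV k = CV k" using b bij_betw_imp_surj_on by blast
  have bF: "bij_betw (\<lambda>A. \<sigma> ` A) (FV k) (FV k)"
  proof (rule bij_betw_byWitness[where f' = "\<lambda>A. ?i ` A"])
    show "\<forall>A\<in>FV k. ?i ` \<sigma> ` A = A"
    proof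
      fix A assume "A \<in> FV k"
      then show "?i ` \<sigma> ` A = A" using inv_into_image_cancel[OF inj FV_sub] by blast
    qed
    show "\<forall>A\<in>FV k. \<sigma> ` ?i ` A = A"
    proof
      fix A assume "A \<in> FV k"
      then show "\<sigma> ` ?i ` A = A" using image_inv_into_cancel[OF surj FV_sub] by blast
    qed
    show "(\<lambda>A. \<sigma> ` A) ` FV k \<subseteq> FV k" using aut_FV[OF a] .
    show "(\<lambda>A. ?i ` A) ` FV k \<subseteq> FV k" using aut_FV[OF ai] .
  qed
  have injF: "inj_on (\<lambda>A. \<sigma> ` A) (FV k)" using bF bij_betw_imp_inj_on by blast
  show ?thesis unfolding graph_automorphism_def
  proof (intro conjI bF ballI)
    fix A B assume AB: "A \<in> FV k" "B \<in> FV k"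
    have neq: "A \<noteq> B \<longleftrightarrow> \<sigma> ` A \<noteq> \<sigma> ` B" using inj_onD[OF injF _ AB(1) AB(2)] by auto
    have sA: "A \<subseteq> CV k" "B \<subseteq> CV k" using FV_sub[OF AB(1)] FV_sub[OF AB(2)] by auto
    have "(\<exists>x\<in>A. \<exists>y\<in>B. hamming_adj x y) \<longleftrightarrow> (\<exists>x\<in>\<sigma> ` A. \<exists>y\<in>\<sigma> ` B. hamming_adj x y)"
    proof
      assume "\<exists>x\<in>A. \<exists>y\<in>B. hamming_adj x y"
      then obtain x y where "x \<in> A" "y \<in> B" "hamming_adj x y" by blast
      moreover have "hamming_adj (\<sigma> x) (\<sigma> y)" using a calculation sA unfolding graph_automorphism_def by blast
      ultimately show "\<exists>x\<in>\<sigma> ` A. \<exists>y\<in>\<sigma> ` B. hamming_adj x y" by blast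
    next
      assume "\<exists>x\<in>\<sigma> ` A. \<exists>y\<in>\<sigma> ` B. hamming_adj x y"
      then obtain x y where xy: "x \<in> A" "y \<in> B" "hamming_adj (\<sigma> x) (\<sigma> y)" by blast
      then have "hamming_adj x y" using a sA unfolding graph_automorphism_def by blast
      then show "\<exists>x\<in>A. \<exists>y\<in>B. hamming_adj x y" using xy by blast
    qed
    then show "folded_cube_adj A B \<longleftrightarrow> folded_cube_adj (\<sigma> ` A) (\<sigma> ` B)"
      using neq unfolding folded_cube_adj_def by blast
  qed
qed

lemma folded_gt: "geodesic_transitive (FV k) folded_cube_adj"
proof (rule quotient_gt[where cls = fold_class and VA = "CV k" and EA = hamming_adj
      and VB = "FV k" and EB = folded_cube_adj and C = "{\<sigma>. graph_automorphism (CV k) hamming_adj \<sigma>}"])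
  show "\<forall>x\<in>CV k. x \<in> fold_class x" using cls_self by blast
  show "\<forall>x\<in>CV k. \<forall>y\<in>fold_class x. y \<in> CV k \<and> fold_class y = fold_class x" using cls_of_mem by blast
  show "FV k = fold_class ` CV k" by (simp add: folded_cube_vertices_def)
  show "\<forall>u\<in>CV k. \<forall>v\<in>CV k. hamming_adj u v \<longrightarrow> folded_cube_adj (fold_class u) (fold_class v) \<or> fold_class u = fold_class v"
    using cls_self unfolding folded_cube_adj_def by blast
  show "\<forall>x\<in>CV k. \<forall>B\<in>FV k. folded_cube_adj (fold_class x) B \<longrightarrow> (\<exists>y\<in>B. hamming_adj x y)"
  proof (intro ballI impI)
    fix x B assume x: "x \<in> CV k" and B: "B \<in> FV k" and adj: "folded_cube_adj (fold_class x) B"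
    then obtain x' y where xy: "x' \<in> fold_class x" "y \<in> B" "hamming_adj x' y"
      unfolding folded_cube_adj_def by blast
    have yc: "y \<in> CV k" using FV_sub[OF B] xy(2) by blast
    obtain y0 where y0: "y0 \<in> CV k" "B = fold_class y0" using B unfolding folded_cube_vertices_def by blast
    have By: "B = fold_class y" using cls_of_mem[OF y0(1)] xy(2) y0(2) by metis
    show "\<exists>y\<in>B. hamming_adj x y"
    proof (cases "x' = x")
      case True then show ?thesis using xy by blast
    next
      case False
      then have "x' = complement x" using xy(1) cls_mem by blast
      then have "hamming_adj (complement x) y" using xy(3) by simp
      then have "hamming_adj (complement (complement x)) (complement y)"
        using adj_compl[OF compl_CV[OF x] yc] by simp
      then have "hamming_adj x (complement y)" using compl_compl[OF x] by simp
      moreover have "complement y \<in> B" using By cls_mem by blast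
      ultimately show ?thesis by blast
    qed
  qed
  show "\<forall>p q. geodesic (CV k) hamming_adj p \<and> geodesic (CV k) hamming_adj q \<and> length p = length q \<longrightarrow>
          (\<exists>\<sigma>\<in>{\<sigma>. graph_automorphism (CV k) hamming_adj \<sigma>}. map \<sigma> p = q)"
    using ham_gt_strong by blast
  show "\<forall>\<sigma>\<in>{\<sigma>. graph_automorphism (CV k) hamming_adj \<sigma>}. graph_automorphism (FV k) folded_cube_adj (\<lambda>A. \<sigma> ` A)"
    using induced_aut by blast
  show "\<forall>\<sigma>\<in>{\<sigma>. graph_automorphism (CV k) hamming_adj \<sigma>}. \<forall>x\<in>CV k. \<sigma> ` fold_class x = fold_class (\<sigma> x)"
    using aut_cls by blast
qed



abbreviation "HFV k \<equiv> halved_folded_cube_vertices k"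

lemma F_q5:
  assumes x: "x \<in> CV k" and B: "B \<in> FV k" and adj: "folded_cube_adj (fold_class x) B"
  shows "\<exists>y\<in>B. hamming_adj x y"
proof -
  obtain x' y where xy: "x' \<in> fold_class x" "y \<in> B" "hamming_adj x' y"
    using adj unfolding folded_cube_adj_def by blast
  have yc: "y \<in> CV k" using FV_sub[OF B] xy(2) by blast
  obtain y0 where y0: "y0 \<in> CV k" "B = fold_class y0" using B unfolding folded_cube_vertices_def by blast
  have By: "B = fold_class y" using cls_of_mem[OF y0(1)] xy(2) y0(2) by metis
  show "\<exists>y\<in>B. hamming_adj x y"
  proof (cases "x' = x")
    case True then show ?thesis using xy by blast
  next
    case False
    then have "x' = complement x" using xy(1) cls_mem by blast
    then have "hamming_adj (complement x) y" using xy(3) by simp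
    then have "hamming_adj (complement (complement x)) (complement y)"
      using adj_compl[OF compl_CV[OF x] yc] by simp
    then have "hamming_adj x (complement y)" using compl_compl[OF x] by simp
    moreover have "complement y \<in> B" using By cls_mem by blast
    ultimately show ?thesis by blast
  qed
qed

lemma F_lift: "\<forall>A\<in>FV k. \<forall>B\<in>FV k. \<forall>x\<in>A. folded_cube_adj A B \<longrightarrow> (\<exists>y\<in>B. hamming_adj x y)"
proof (intro ballI impI)
  fix A B x assume h: "A \<in> FV k" "B \<in> FV k" "x \<in> A" "folded_cube_adj A B"
  obtain x0 where x0: "x0 \<in> CV k" "A = fold_class x0" using h(1) unfolding folded_cube_vertices_def by blast
  then have xc: "x \<in> CV k" and fx: "fold_class x = A" using cls_of_mem[OF x0(1)] h(3) by auto
  have "folded_cube_adj (fold_class x) B" using fx h(4) by simp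
  then show "\<exists>y\<in>B. hamming_adj x y" using F_q5[OF xc h(2)] by blast
qed

lemma F_proj: "\<forall>u\<in>CV k. \<forall>v\<in>CV k. hamming_adj u v \<longrightarrow> folded_cube_adj (fold_class u) (fold_class v) \<or> fold_class u = fold_class v"
  using cls_self unfolding folded_cube_adj_def by blast

lemma F_img: "fold_class ` CV k \<subseteq> FV k" by (simp add: folded_cube_vertices_def)

lemma lemL:
  assumes A: "A \<in> FV k" and B: "B \<in> FV k" and x: "x \<in> A"
  shows "\<exists>y\<in>B. gdist (CV k) hamming_adj x y = gdist (FV k) folded_cube_adj A B"
proof -
  have xc: "x \<in> CV k" using FV_sub[OF A] x by blast
  have Ax: "A = fold_class x" using A x cls_of_mem unfolding folded_cube_vertices_def by blast
  obtain y1 where y1: "y1 \<in> CV k" "B = fold_class y1" using B unfolding folded_cube_vertices_def by blast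
  obtain p where p: "walk (CV k) hamming_adj p" "hd p = x" "last p = y1" using ham_walk[OF xc y1(1)] by blast
  obtain P where P: "walk (FV k) folded_cube_adj P" "hd P = A" "last P = B"
    using walk_project[OF F_img F_proj p(1)] p Ax y1 by metis
  obtain P' where P': "walk (FV k) folded_cube_adj P'" "hd P' = A" "last P' = B"
    "length P' = Suc (gdist (FV k) folded_cube_adj A B)"
    using gdist_attained[OF P] by blast
  have sub: "\<forall>A\<in>FV k. A \<subseteq> CV k" using FV_sub by blast
  obtain q where q: "walk (CV k) hamming_adj q" "hd q = x" "length q = length P'"
    "\<forall>j<length P'. q ! j \<in> P' ! j"
    using walk_lift[OF sub F_lift P'(1)] P'(2) x by blast
  have neq: "q \<noteq> []" "P' \<noteq> []" using q P' walk_nonempty by blast+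
  have lq: "last q = q ! (length P' - 1)" using neq q(3) by (simp add: last_conv_nth)
  have lP: "last P' = P' ! (length P' - 1)" using neq by (simp add: last_conv_nth)
  have "q ! (length P' - 1) \<in> P' ! (length P' - 1)" using q(4) neq by simp
  then have "last q \<in> B" using lq lP P'(3) by simp
  moreover have yc: "last q \<in> CV k" using walk_set[OF q(1)] neq by auto
  moreover have "fold_class (last q) = B" using calculation cls_of_mem y1 by metis
  moreover have "gdist (CV k) hamming_adj x (last q) \<le> gdist (FV k) folded_cube_adj A B"
    using gdist_le[OF q(1)] q(2,3) P'(4) by simp
  moreover have "gdist (FV k) folded_cube_adj (fold_class x) (fold_class (last q)) \<le> gdist (CV k) hamming_adj x (last q)"
    using gdist_project[OF F_img F_proj q(1) q(2) refl] .
  ultimately show ?thesis using Ax by (metis le_antisym)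
qed

lemma weight_compl:
  assumes x: "x \<in> CV k"
  shows "weight (complement x) = k - weight x"
proof -
  have l: "length x = k" using x by (simp add: hamV_iff)
  have "{i. i < k \<and> 1 - x ! i = 1} = {..<k} - {i. i < k \<and> x ! i = 1}"
    using bin[OF x] by force
  moreover have "{i. i < length (complement x) \<and> complement x ! i = 1} = {i. i < k \<and> 1 - x ! i = 1}"
    using l by auto
  ultimately have "weight (complement x) = card ({..<k} - {i. i < k \<and> x ! i = 1})"
    unfolding weight_def by simp
  also have "\<dots> = k - card {i. i < k \<and> x ! i = 1}" by (subst card_Diff_subset) auto
  finally show ?thesis using l by (simp add: weight_def)
qed

lemma weight_le: "weight x \<le> length x"
  unfolding weight_def by (rule order.trans[OF card_mono[of "{..<length x}"]]) auto

lemma compl_EV: "even k \<Longrightarrow> x \<in> EV k \<Longrightarrow> complement x \<in> EV k"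
proof -
  assume k: "even k" and x: "x \<in> EV k"
  then have xc: "x \<in> CV k" and e: "even (weight x)" by (auto simp: halved_cube_vertices_def)
  have "weight x \<le> k" using weight_le[of x] xc by (simp add: hamV_iff)
  then have "even (k - weight x)" using k e by simp
  then show ?thesis using weight_compl[OF xc] compl_CV[OF xc] by (simp add: halved_cube_vertices_def)
qed

lemma HFV_eq: "HFV k = fold_class ` EV k"
proof
  show "HFV k \<subseteq> fold_class ` EV k"
  proof
    fix A assume "A \<in> HFV k"
    then obtain x0 x where "x0 \<in> CV k" "A = fold_class x0" "x \<in> A" "even (weight x)"
      unfolding halved_folded_cube_vertices_def folded_cube_vertices_def by blast
    then have "x \<in> CV k" "A = fold_class x" using cls_of_mem by metis+
    then show "A \<in> fold_class ` EV k" using \<open>even (weight x)\<close> by (auto simp: halved_cube_vertices_def)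
  qed
  show "fold_class ` EV k \<subseteq> HFV k"
    using cls_self EV_sub[of k]
    by (auto simp: halved_folded_cube_vertices_def folded_cube_vertices_def halved_cube_vertices_def)
qed



lemma hfe_fun: "halved_folded_cube_adj k = (\<lambda>A B. gdist (FV k) folded_cube_adj A B = 2)"
  by (simp add: fun_eq_iff halved_folded_cube_adj_def)

lemma HFV_sub: "HFV k \<subseteq> FV k" by (auto simp: halved_folded_cube_vertices_def)

lemma cls_FV: "x \<in> CV k \<Longrightarrow> fold_class x \<in> FV k" by (simp add: folded_cube_vertices_def)

lemma EV_cls:
  assumes k: "even k" and x: "x \<in> EV k" and y: "y \<in> fold_class x"
  shows "y \<in> EV k \<and> fold_class y = fold_class x"
proof -
  have xc: "x \<in> CV k" using x EV_sub[of k] by auto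
  have "y = x \<or> y = complement x" using y cls_mem by blast
  then show ?thesis using compl_EV[OF k x] cls_compl[OF xc] x by auto
qed

lemma HF_proj:
  assumes k: "even k" and u: "u \<in> EV k" and v: "v \<in> EV k" and adj: "halved_cube_adj k u v"
  shows "halved_folded_cube_adj k (fold_class u) (fold_class v) \<or> fold_class u = fold_class v"
proof -
  have uc: "u \<in> CV k" and vc: "v \<in> CV k" using u v EV_sub[of k] by auto
  let ?g = "gdist (FV k) folded_cube_adj (fold_class u) (fold_class v)"
  obtain p where p: "walk (CV k) hamming_adj p" "hd p = u" "last p = v" using ham_walk[OF uc vc] by blast
  have "?g \<le> gdist (CV k) hamming_adj u v" using gdist_project[OF F_img F_proj p] .
  then have g2: "?g \<le> 2" using adj by (simp add: halved_cube_adj_def)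
  obtain y' where y': "y' \<in> fold_class v" "gdist (CV k) hamming_adj u y' = ?g"
    using lemL[OF cls_FV[OF uc] cls_FV[OF vc] cls_self] by blast
  have y'E: "y' \<in> EV k" using EV_cls[OF k v y'(1)] by blast
  then have y'c: "y' \<in> CV k" using EV_sub[of k] by auto
  have "even ?g" using y'(2) gdist_ham[OF uc y'c] ham_even[OF u y'E] by simp
  moreover have "\<forall>n::nat. even n \<longrightarrow> n \<le> 2 \<longrightarrow> n = 0 \<or> n = 2" by presburger
  ultimately have "?g = 0 \<or> ?g = 2" using g2 by blast
  then show ?thesis
  proof
    assume "?g = 2" then show ?thesis by (simp add: halved_folded_cube_adj_def)
  next
    assume g0: "?g = 0"
    obtain P where P: "walk (FV k) folded_cube_adj P" "hd P = fold_class u" "last P = fold_class v"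
      using walk_project[OF F_img F_proj p(1)] p by metis
    then show ?thesis using gdist_zero[OF P g0] by simp
  qed
qed

lemma HF_q5:
  assumes x: "x \<in> EV k" and B: "B \<in> HFV k" and adj: "halved_folded_cube_adj k (fold_class x) B"
  shows "\<exists>y\<in>B. halved_cube_adj k x y"
proof -
  have xc: "x \<in> CV k" using x EV_sub[of k] by auto
  have BF: "B \<in> FV k" using B HFV_sub by blast
  obtain y where "y \<in> B" "gdist (CV k) hamming_adj x y = gdist (FV k) folded_cube_adj (fold_class x) B"
    using lemL[OF cls_FV[OF xc] BF cls_self] by blast
  then show ?thesis using adj by (auto simp: halved_folded_cube_adj_def halved_cube_adj_def)
qed

lemma HF_q7:
  assumes s: "\<sigma> \<in> Ch k"
  shows "graph_automorphism (HFV k) (halved_folded_cube_adj k) (\<lambda>A. \<sigma> ` A)"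
proof -
  have a: "graph_automorphism (CV k) hamming_adj \<sigma>" and bE: "bij_betw \<sigma> (EV k) (EV k)"
    using s unfolding Ch_def by auto
  have ia: "graph_automorphism (FV k) folded_cube_adj (\<lambda>A. \<sigma> ` A)" using induced_aut[OF a] .
  have inj: "inj_on (\<lambda>A. \<sigma> ` A) (HFV k)"
    using aut_bij[OF ia] HFV_sub bij_betw_imp_inj_on inj_on_subset by metis
  have "(\<lambda>A. \<sigma> ` A) ` HFV k = (\<lambda>x. fold_class (\<sigma> x)) ` EV k"
    unfolding HFV_eq image_image
  proof (rule image_cong[OF refl])
    fix x assume "x \<in> EV k"
    then have "x \<in> CV k" using EV_sub[of k] by auto
    then show "\<sigma> ` fold_class x = fold_class (\<sigma> x)" using aut_cls[OF a] by blast
  qed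
  also have "\<dots> = fold_class ` (\<sigma> ` EV k)" by (simp add: image_image)
  also have "\<dots> = HFV k" using bE HFV_eq by (simp add: bij_betw_def)
  finally have "bij_betw (\<lambda>A. \<sigma> ` A) (HFV k) (HFV k)" using inj by (simp add: bij_betw_def)
  then show ?thesis unfolding hfe_fun using aut_dist2[OF ia HFV_sub] by blast
qed

lemma hf_gt:
  assumes k: "even k"
  shows "geodesic_transitive (HFV k) (halved_folded_cube_adj k)"
proof (rule quotient_gt[where cls = fold_class and VA = "EV k" and EA = "halved_cube_adj k"
      and VB = "HFV k" and EB = "halved_folded_cube_adj k" and C = "Ch k"])
  show "\<forall>x\<in>EV k. x \<in> fold_class x" using cls_self by blast
  show "\<forall>x\<in>EV k. \<forall>y\<in>fold_class x. y \<in> EV k \<and> fold_class y = fold_class x" using EV_cls[OF k] by blast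
  show "HFV k = fold_class ` EV k" by (rule HFV_eq)
  show "\<forall>u\<in>EV k. \<forall>v\<in>EV k. halved_cube_adj k u v \<longrightarrow>
          halved_folded_cube_adj k (fold_class u) (fold_class v) \<or> fold_class u = fold_class v"
    using HF_proj[OF k] by blast
  show "\<forall>x\<in>EV k. \<forall>B\<in>HFV k. halved_folded_cube_adj k (fold_class x) B \<longrightarrow> (\<exists>y\<in>B. halved_cube_adj k x y)"
    using HF_q5 by blast
  show "\<forall>p q. geodesic (EV k) (halved_cube_adj k) p \<and> geodesic (EV k) (halved_cube_adj k) q \<and> length p = length q \<longrightarrow>
          (\<exists>\<sigma>\<in>Ch k. map \<sigma> p = q)"
    using hc_gt_strong by blast
  show "\<forall>\<sigma>\<in>Ch k. graph_automorphism (HFV k) (halved_folded_cube_adj k) (\<lambda>A. \<sigma> ` A)"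
    using HF_q7 by blast
  show "\<forall>\<sigma>\<in>Ch k. \<forall>x\<in>EV k. \<sigma> ` fold_class x = fold_class (\<sigma> x)"
  proof (intro ballI)
    fix \<sigma> x assume "\<sigma> \<in> Ch k" "x \<in> EV k"
    then show "\<sigma> ` fold_class x = fold_class (\<sigma> x)"
      using aut_cls[of k \<sigma> x] EV_sub[of k] unfolding Ch_def by auto
  qed
qed

theorem proposition3p7:
  fixes k m :: nat
  shows "(m \<ge> 2 \<longrightarrow> geodesic_transitive (hamming_vertices k m) hamming_adj)
       \<and> geodesic_transitive (halved_cube_vertices k) (halved_cube_adj k)
       \<and> geodesic_transitive (folded_cube_vertices k) folded_cube_adj
       \<and> (even k \<longrightarrow> geodesic_transitive (halved_folded_cube_vertices k) (halved_folded_cube_adj k))"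
  using ham_gt hc_gt folded_gt hf_gt by blast

end
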